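(* Let $q\in\ell^1(\mathbb{Z})$ be real, $H=-\Delta_L+q$ on $\ell^2(\mathbb{Z})$, and $\mathcal{R}(\omega)=(H-\omega)^{-1}$. Then for every $\omega\in(0,4)$ and every $\sigma>1/2$, $\mathcal{R}(\omega\pm\mathrm{i}\varepsilon)$ converges as $\varepsilon\to0+$ in the operator norm of $\mathcal{L}(\ell^2_\sigma,\ell^2_{-\sigma})$ to a limit denoted $\mathcal{R}(\omega\pm\mathrm{i}0)$.
   Context: $(Hu)_n=-(u_{n+1}-2u_n+u_{n-1})+q_nu_n$; $\ell^2_\sigma$ has norm $\big(\sum_n(1+|n|)^{2\sigma}|u(n)|^2\big)^{1/2}$. *)

theory Defs
  imports "HOL-Analysis.Analysis"
begin

definition Hop :: "(int \<Rightarrow> real) \<Rightarrow> (int \<Rightarrow> complex) \<Rightarrow> int \<Rightarrow> complex" where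
  "Hop q u n = - (u (n + 1) - 2 * u n + u (n - 1)) + complex_of_real (q n) * u n"

definition l2w :: "real \<Rightarrow> (int \<Rightarrow> complex) \<Rightarrow> bool" where
  "l2w \<sigma> u \<longleftrightarrow> (\<lambda>n. (1 + real_of_int \<bar>n\<bar>) powr (2 * \<sigma>) * (cmod (u n))\<^sup>2) summable_on UNIV"

definition wnorm :: "real \<Rightarrow> (int \<Rightarrow> complex) \<Rightarrow> real" where
  "wnorm \<sigma> u = sqrt (\<Sum>\<^sub>\<infinity>n. (1 + real_of_int \<bar>n\<bar>) powr (2 * \<sigma>) * (cmod (u n))\<^sup>2)"

definition resolvent :: "(int \<Rightarrow> real) \<Rightarrow> complex \<Rightarrow> (int \<Rightarrow> complex) \<Rightarrow> (int \<Rightarrow> complex)" where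
  "resolvent q z f = (THE u. l2w 0 u \<and> (\<forall>n. Hop q u n - z * u n = f n))"

end

theory Submission
  imports Defs
begin



lemma nat_shift_summable:
  fixes g :: "int \<Rightarrow> real"
  assumes g: "g summable_on UNIV" and nn: "\<And>n. g n \<ge> 0"
  shows "summable (\<lambda>j::nat. g (a + int j))" "(\<Sum>j. g (a + int j)) \<le> infsum g UNIV"
proof -
  have inj: "inj (\<lambda>j::nat. a + int j)" by (auto simp: inj_def)
  have gr: "g summable_on range (\<lambda>j::nat. a + int j)"
    using g by (rule summable_on_subset) simp
  then have s: "(\<lambda>j::nat. g (a + int j)) summable_on UNIV"
    using summable_on_reindex[OF inj, of g] by (simp add: o_def)
  have nn': "\<And>j. g (a + int j) \<ge> 0" by (rule nn)
  show sm: "summable (\<lambda>j::nat. g (a + int j))"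
    using summable_on_UNIV_nonneg_real_iff[of "\<lambda>j. g (a + int j)", OF nn'] s by simp
  have "((\<lambda>j. g (a + int j)) has_sum (\<Sum>j. g (a + int j))) UNIV"
    by (rule sums_nonneg_imp_has_sum[OF summable_sums[OF sm] nn'])
  then have "(\<Sum>j. g (a + int j)) = infsum (\<lambda>j::nat. g (a + int j)) UNIV"
    by (simp add: infsumI)
  also have "\<dots> = infsum g (range (\<lambda>j::nat. a + int j))"
    using infsum_reindex[OF inj, of g] by (simp add: o_def)
  also have "\<dots> \<le> infsum g UNIV"
    by (rule infsum_mono_neutral[OF gr g]) (simp_all add: nn)
  finally show "(\<Sum>j. g (a + int j)) \<le> infsum g UNIV" .
qed
lemma nat_shift_tail:
  fixes g :: "int \<Rightarrow> real"
  assumes g: "g summable_on UNIV" and nn: "\<And>n. g n \<ge> 0"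
  shows "(\<lambda>k. \<Sum>j. g (a + int k + int j)) \<longlonglongrightarrow> 0"
proof -
  have sm: "summable (\<lambda>j::nat. g (a + int j))" by (rule nat_shift_summable[OF g nn])
  have eq: "(\<lambda>k. \<Sum>j. g (a + int k + int j)) = (\<lambda>k. \<Sum>j. g (a + int (j + k)))"
  proof (rule ext)
    fix k :: nat
    have "\<And>j. a + int k + int j = a + int (j + k)" by simp
    then show "(\<Sum>j. g (a + int k + int j)) = (\<Sum>j. g (a + int (j + k)))" by presburger
  qed
  show ?thesis unfolding eq LIMSEQ_iff
  proof (intro allI impI)
    fix r :: real assume "0 < r"
    from suminf_exist_split[OF this sm] obtain N where
      "\<forall>n\<ge>N. norm (\<Sum>i. g (a + int (i + n))) < r" by blast
    then show "\<exists>N. \<forall>n\<ge>N. norm ((\<Sum>j. g (a + int (j + n))) - 0) < r" by (intro exI[of _ N]) simp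
  qed
qed


lemma int_summable_from_nat:
  fixes g :: "int \<Rightarrow> real"
  assumes "summable (\<lambda>n. g (int n))" "summable (\<lambda>n. g (- int n))" "\<And>n. g n \<ge> 0"
  shows "g summable_on UNIV"
proof -
  have i1: "inj (\<lambda>n::nat. int n)" and i2: "inj (\<lambda>n::nat. - int n)" by (auto simp: inj_def)
  have "(\<lambda>n. g (int n)) summable_on UNIV"
    by (rule summable_nonneg_imp_summable_on) (use assms in auto)
  then have 1: "g summable_on range (\<lambda>n::nat. int n)"
    using summable_on_reindex[OF i1, of g] by (simp add: o_def)
  have "(\<lambda>n. g (- int n)) summable_on UNIV"
    by (rule summable_nonneg_imp_summable_on) (use assms in auto)
  then have 2: "g summable_on range (\<lambda>n::nat. - int n)"
    using summable_on_reindex[OF i2, of g] by (simp add: o_def)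
  have 3: "g summable_on (range (\<lambda>n::nat. int n) \<union> range (\<lambda>n::nat. - int n))"
    using 1 2 by (rule summable_on_union)
  have "range (\<lambda>n::nat. int n) \<union> range (\<lambda>n::nat. - int n) = UNIV"
  proof -
    { fix x :: int have "x \<in> range (\<lambda>n::nat. int n) \<union> range (\<lambda>n::nat. - int n)"
      proof (cases "x \<ge> 0")
        case True then have "x = int (nat x)" by simp
        then show ?thesis by (intro UnI1) (rule range_eqI)
      next
        case False then have "x = - int (nat (-x))" by simp
        then show ?thesis by (intro UnI2) (rule range_eqI)
      qed }
    then show ?thesis by blast
  qed
  with 3 show ?thesis by simp
qed

lemma infsum_CS:
  fixes a b :: "'a \<Rightarrow> real"
  assumes a: "(\<lambda>x. (a x)\<^sup>2) summable_on A" and b: "(\<lambda>x. (b x)\<^sup>2) summable_on A"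
    and an: "\<And>x. a x \<ge> 0" and bn: "\<And>x. b x \<ge> 0"
  shows "(\<lambda>x. a x * b x) summable_on A"
    "infsum (\<lambda>x. a x * b x) A \<le> sqrt (infsum (\<lambda>x. (a x)\<^sup>2) A) * sqrt (infsum (\<lambda>x. (b x)\<^sup>2) A)"
proof -
  have "(\<lambda>x. (a x)\<^sup>2 + (b x)\<^sup>2) summable_on A" using a b by (rule summable_on_add)
  moreover have "a x * b x \<le> (a x)\<^sup>2 + (b x)\<^sup>2" for x
  proof -
    have "2 * a x * b x \<le> (a x)\<^sup>2 + (b x)\<^sup>2" by (rule sum_squares_bound)
    moreover have "a x * b x \<ge> 0" using an[of x] bn[of x] by simp
    ultimately show ?thesis by linarith
  qed
  ultimately show sm: "(\<lambda>x. a x * b x) summable_on A"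
  proof (rule summable_on_comparison_test)
    fix x show "0 \<le> a x * b x" using an[of x] bn[of x] by (rule mult_nonneg_nonneg)
  qed
  show "infsum (\<lambda>x. a x * b x) A \<le> sqrt (infsum (\<lambda>x. (a x)\<^sup>2) A) * sqrt (infsum (\<lambda>x. (b x)\<^sup>2) A)"
  proof (rule infsum_le_finite_sums[OF sm])
    fix F assume F: "finite F" "F \<subseteq> A"
    have "sum (\<lambda>x. a x * b x) F \<le> sqrt (sum (\<lambda>x. (a x)\<^sup>2) F) * sqrt (sum (\<lambda>x. (b x)\<^sup>2) F)"
    proof -
      have "(sum (\<lambda>x. a x * b x) F)\<^sup>2 \<le> sum (\<lambda>x. (a x)\<^sup>2) F * sum (\<lambda>x. (b x)\<^sup>2) F"
        by (rule Cauchy_Schwarz_ineq_sum)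
      then have "sqrt ((sum (\<lambda>x. a x * b x) F)\<^sup>2) \<le> sqrt (sum (\<lambda>x. (a x)\<^sup>2) F * sum (\<lambda>x. (b x)\<^sup>2) F)"
        by (rule real_sqrt_le_mono)
      moreover have "sum (\<lambda>x. a x * b x) F \<ge> 0" using an bn by (simp add: sum_nonneg)
      ultimately show ?thesis by (simp only: real_sqrt_abs abs_of_nonneg real_sqrt_mult)
    qed
    also have "\<dots> \<le> sqrt (infsum (\<lambda>x. (a x)\<^sup>2) A) * sqrt (infsum (\<lambda>x. (b x)\<^sup>2) A)"
    proof (rule mult_mono)
      show "sqrt (sum (\<lambda>x. (a x)\<^sup>2) F) \<le> sqrt (infsum (\<lambda>x. (a x)\<^sup>2) A)"
        by (rule real_sqrt_le_mono, rule finite_sum_le_infsum[OF a F]) simp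
      show "sqrt (sum (\<lambda>x. (b x)\<^sup>2) F) \<le> sqrt (infsum (\<lambda>x. (b x)\<^sup>2) A)"
        by (rule real_sqrt_le_mono, rule finite_sum_le_infsum[OF b F]) simp
    qed (auto simp: infsum_nonneg sum_nonneg)
    finally show "sum (\<lambda>x. a x * b x) F \<le> sqrt (infsum (\<lambda>x. (a x)\<^sup>2) A) * sqrt (infsum (\<lambda>x. (b x)\<^sup>2) A)" .
  qed
qed




definition Dset :: "real \<Rightarrow> complex set" where
  "Dset \<delta> = {\<zeta>. \<zeta> \<noteq> 0 \<and> cmod \<zeta> \<le> 1 \<and> \<delta> \<le> cmod (\<zeta> - 1/\<zeta>)}"
definition sh :: "int \<Rightarrow> nat \<Rightarrow> int" where "sh n j = n + 1 + int j"
definition Kt :: "complex \<Rightarrow> nat \<Rightarrow> complex" where "Kt \<zeta> m = (\<zeta>^(2*m) - 1) / (\<zeta> - 1/\<zeta>)"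
definition Tj :: "(int \<Rightarrow> real) \<Rightarrow> complex \<Rightarrow> (int \<Rightarrow> complex) \<Rightarrow> int \<Rightarrow> complex" where
  "Tj p \<zeta> h n = 1 + (\<Sum>j. Kt \<zeta> (Suc j) * complex_of_real (p (sh n j)) * h (sh n j))"
definition hit :: "(int \<Rightarrow> real) \<Rightarrow> complex \<Rightarrow> nat \<Rightarrow> int \<Rightarrow> complex" where
  "hit p \<zeta> i = (Tj p \<zeta> ^^ i) (\<lambda>_. 1)"
definition dif :: "(int \<Rightarrow> real) \<Rightarrow> complex \<Rightarrow> nat \<Rightarrow> int \<Rightarrow> complex" where
  "dif p \<zeta> i n = hit p \<zeta> (Suc i) n - hit p \<zeta> i n"
definition jost :: "(int \<Rightarrow> real) \<Rightarrow> complex \<Rightarrow> int \<Rightarrow> complex" where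
  "jost p \<zeta> n = 1 + (\<Sum>i. dif p \<zeta> i n)"

lemma sh_Suc: "sh n (Suc j) = sh (n + 1) j" by (simp add: sh_def)
lemma sh_minus: "sh (n - 1) j = n + int j" by (simp add: sh_def)
lemma sh_alt: "sh n j = (n + 1) + int j" by (simp add: sh_def)
lemma hit_0: "hit p \<zeta> 0 = (\<lambda>_. 1)" by (simp add: hit_def)
lemma hit_Suc: "hit p \<zeta> (Suc i) = Tj p \<zeta> (hit p \<zeta> i)" by (simp add: hit_def)
lemma Kt_0: "Kt \<zeta> 0 = 0" by (simp add: Kt_def)

locale pot =
  fixes p :: "int \<Rightarrow> real" and \<delta> :: real
  assumes psum: "(\<lambda>n. \<bar>p n\<bar>) summable_on UNIV" and dpos: "0 < \<delta>"
begin

definition "PS = infsum (\<lambda>n. \<bar>p n\<bar>) UNIV"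
definition "Mk = 2 / \<delta>"
definition "Qs n = (\<Sum>j. \<bar>p (sh n j)\<bar>)"
definition "EE = exp (2 * Mk * PS)"

lemma Mk_pos: "0 < Mk" using dpos by (simp add: Mk_def)

lemma Kt_bound:
  assumes "\<zeta> \<in> Dset \<delta>" shows "cmod (Kt \<zeta> m) \<le> Mk"
proof -
  from assms have z: "cmod \<zeta> \<le> 1" "\<delta> \<le> cmod (\<zeta> - 1/\<zeta>)" by (auto simp: Dset_def)
  have a: "cmod (\<zeta>^(2*m) - 1) \<le> cmod (\<zeta>^(2*m)) + 1" by (metis norm_triangle_ineq4 norm_one)
  have b: "cmod (\<zeta>^(2*m)) \<le> 1" using z by (simp add: norm_power power_le_one)
  have num: "cmod (\<zeta>^(2*m) - 1) \<le> 2" using a b by linarith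
  have "cmod (Kt \<zeta> m) = cmod (\<zeta>^(2*m) - 1) / cmod (\<zeta> - 1/\<zeta>)" by (simp add: Kt_def norm_divide)
  also have "\<dots> \<le> 2 / \<delta>" using num z dpos by (intro frac_le) auto
  finally show ?thesis by (simp add: Mk_def)
qed

lemma psh_summable: "summable (\<lambda>j. \<bar>p (sh n j)\<bar>)"
  unfolding sh_alt by (rule nat_shift_summable(1)[OF psum]) simp

lemma Qs_le: "Qs n \<le> PS"
  unfolding Qs_def PS_def sh_alt by (rule nat_shift_summable(2)[OF psum]) simp

lemma Qs_nonneg: "0 \<le> Qs n"
  unfolding Qs_def by (rule suminf_nonneg[OF psh_summable]) simp

lemma PS_nonneg: "0 \<le> PS" using Qs_nonneg Qs_le order.trans by blast

lemma Qs_rec: "Qs n = \<bar>p (n+1)\<bar> + Qs (n+1)"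
proof -
  have "(\<Sum>j. \<bar>p (sh n (Suc j))\<bar>) = (\<Sum>j. \<bar>p (sh n j)\<bar>) - \<bar>p (sh n 0)\<bar>"
    by (rule suminf_split_head[OF psh_summable])
  then show ?thesis unfolding Qs_def sh_Suc by (simp add: sh_def)
qed

lemma Qs_tend: "(\<lambda>k. Qs (n + int k)) \<longlonglongrightarrow> 0"
proof -
  have "(\<lambda>k. \<Sum>j. \<bar>p ((n + 1) + int k + int j)\<bar>) \<longlonglongrightarrow> 0"
    by (rule nat_shift_tail[OF psum]) simp
  moreover have "\<And>k j. sh (n + int k) j = (n + 1) + int k + int j" by (simp add: sh_def)
  ultimately show ?thesis unfolding Qs_def by simp
qed

lemma weighted_tele:
  shows "summable (\<lambda>j. \<bar>p (sh n j)\<bar> * exp (2 * Mk * Qs (sh n j)))"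
    and "(\<Sum>j. \<bar>p (sh n j)\<bar> * exp (2 * Mk * Qs (sh n j))) \<le> (exp (2 * Mk * Qs n) - 1) / (2 * Mk)"
proof -
  define ew where "ew k = exp (2 * Mk * Qs (n + int k))" for k :: nat
  have shk: "sh n j = n + int j + 1" for j by (simp add: sh_def)
  have step: "2 * Mk * (\<bar>p (sh n j)\<bar> * exp (2 * Mk * Qs (sh n j))) \<le> ew j - ew (Suc j)" for j
  proof -
    have q: "Qs (n + int j) = \<bar>p (sh n j)\<bar> + Qs (sh n j)"
      using Qs_rec[of "n + int j"] by (simp add: shk)
    have e: "ew (Suc j) = exp (2 * Mk * Qs (sh n j))" by (simp add: ew_def shk ac_simps)
    have "ew j = exp (2 * Mk * \<bar>p (sh n j)\<bar>) * ew (Suc j)"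
      unfolding e by (simp add: ew_def q distrib_left exp_add)
    moreover have "1 + 2 * Mk * \<bar>p (sh n j)\<bar> \<le> exp (2 * Mk * \<bar>p (sh n j)\<bar>)"
      by (rule exp_ge_add_one_self)
    moreover have "ew (Suc j) \<ge> 0" by (simp add: ew_def)
    ultimately have "(1 + 2 * Mk * \<bar>p (sh n j)\<bar>) * ew (Suc j) \<le> ew j"
      by (simp add: mult_right_mono)
    then show ?thesis by (simp add: e algebra_simps)
  qed
  have "ew \<longlonglongrightarrow> exp (2 * Mk * 0)"
    unfolding ew_def by (intro tendsto_intros Qs_tend)
  then have tel: "(\<lambda>j. ew j - ew (Suc j)) sums (ew 0 - 1)"
    using telescope_sums'[of ew 1] by simp
  then have tel2: "(\<lambda>j. (ew j - ew (Suc j)) / (2 * Mk)) sums ((ew 0 - 1) / (2 * Mk))"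
    by (rule sums_divide)
  have bnd: "\<bar>p (sh n j)\<bar> * exp (2 * Mk * Qs (sh n j)) \<le> (ew j - ew (Suc j)) / (2 * Mk)" for j
    using step[of j] Mk_pos by (simp add: field_simps)
  show sm: "summable (\<lambda>j. \<bar>p (sh n j)\<bar> * exp (2 * Mk * Qs (sh n j)))"
    by (rule summable_comparison_test[OF _ sums_summable[OF tel2]]) (use bnd in auto)
  have "(\<Sum>j. \<bar>p (sh n j)\<bar> * exp (2 * Mk * Qs (sh n j))) \<le> (\<Sum>j. (ew j - ew (Suc j)) / (2 * Mk))"
    by (rule suminf_le[OF bnd sm sums_summable[OF tel2]])
  also have "\<dots> = (ew 0 - 1) / (2 * Mk)" using tel2 by (simp add: sums_iff)
  finally show "(\<Sum>j. \<bar>p (sh n j)\<bar> * exp (2 * Mk * Qs (sh n j))) \<le> (exp (2 * Mk * Qs n) - 1) / (2 * Mk)"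
    by (simp add: ew_def)
qed

lemma contraction:
  assumes z: "\<zeta> \<in> Dset \<delta>" and c: "0 \<le> c" and d: "\<And>k. cmod (d k) \<le> c * exp (2 * Mk * Qs k)"
  shows "summable (\<lambda>j. Kt \<zeta> (Suc j) * complex_of_real (p (sh n j)) * d (sh n j))"
    and "cmod (\<Sum>j. Kt \<zeta> (Suc j) * complex_of_real (p (sh n j)) * d (sh n j)) \<le> c / 2 * exp (2 * Mk * Qs n)"
proof -
  have b: "cmod (Kt \<zeta> (Suc j) * complex_of_real (p (sh n j)) * d (sh n j))
      \<le> (Mk * c) * (\<bar>p (sh n j)\<bar> * exp (2 * Mk * Qs (sh n j)))" for j
  proof -
    have "cmod (Kt \<zeta> (Suc j) * complex_of_real (p (sh n j)) * d (sh n j))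
        = cmod (Kt \<zeta> (Suc j)) * \<bar>p (sh n j)\<bar> * cmod (d (sh n j))" by (simp add: norm_mult)
    also have "\<dots> \<le> Mk * \<bar>p (sh n j)\<bar> * (c * exp (2 * Mk * Qs (sh n j)))"
      by (intro mult_mono Kt_bound z d) (use Mk_pos in auto)
    finally show ?thesis by (simp add: algebra_simps)
  qed
  have s2: "summable (\<lambda>j. (Mk * c) * (\<bar>p (sh n j)\<bar> * exp (2 * Mk * Qs (sh n j))))"
    by (rule summable_mult[OF weighted_tele(1)])
  show "summable (\<lambda>j. Kt \<zeta> (Suc j) * complex_of_real (p (sh n j)) * d (sh n j))"
    by (rule summable_comparison_test[OF _ s2]) (use b in auto)
  have "cmod (\<Sum>j. Kt \<zeta> (Suc j) * complex_of_real (p (sh n j)) * d (sh n j))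
      \<le> (\<Sum>j. (Mk * c) * (\<bar>p (sh n j)\<bar> * exp (2 * Mk * Qs (sh n j))))"
    by (rule norm_suminf_le[OF b s2])
  also have "\<dots> = (Mk * c) * (\<Sum>j. \<bar>p (sh n j)\<bar> * exp (2 * Mk * Qs (sh n j)))"
    by (rule suminf_mult[OF weighted_tele(1)])
  also have "\<dots> \<le> (Mk * c) * ((exp (2 * Mk * Qs n) - 1) / (2 * Mk))"
    by (rule mult_left_mono[OF weighted_tele(2)]) (use Mk_pos c in simp)
  also have "\<dots> \<le> c / 2 * exp (2 * Mk * Qs n)"
    using Mk_pos c by (simp add: field_simps)
  finally show "cmod (\<Sum>j. Kt \<zeta> (Suc j) * complex_of_real (p (sh n j)) * d (sh n j)) \<le> c / 2 * exp (2 * Mk * Qs n)" .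
qed

lemma plain_bound:
  assumes z: "\<zeta> \<in> Dset \<delta>" and d: "\<And>k. cmod (d k) \<le> B"
  shows "summable (\<lambda>j. Kt \<zeta> (Suc j) * complex_of_real (p (sh n j)) * d (sh n j))"
    and "cmod (\<Sum>j. Kt \<zeta> (Suc j) * complex_of_real (p (sh n j)) * d (sh n j)) \<le> Mk * B * Qs n"
proof -
  have B: "0 \<le> B" using d[of 0] norm_ge_zero order.trans by blast
  have b: "cmod (Kt \<zeta> (Suc j) * complex_of_real (p (sh n j)) * d (sh n j)) \<le> (Mk * B) * \<bar>p (sh n j)\<bar>" for j
  proof -
    have "cmod (Kt \<zeta> (Suc j) * complex_of_real (p (sh n j)) * d (sh n j))
        = cmod (Kt \<zeta> (Suc j)) * \<bar>p (sh n j)\<bar> * cmod (d (sh n j))" by (simp add: norm_mult)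
    also have "\<dots> \<le> Mk * \<bar>p (sh n j)\<bar> * B"
      by (intro mult_mono Kt_bound z d) (use Mk_pos in auto)
    finally show ?thesis by (simp add: algebra_simps)
  qed
  have s2: "summable (\<lambda>j. (Mk * B) * \<bar>p (sh n j)\<bar>)" by (rule summable_mult[OF psh_summable])
  show "summable (\<lambda>j. Kt \<zeta> (Suc j) * complex_of_real (p (sh n j)) * d (sh n j))"
    by (rule summable_comparison_test[OF _ s2]) (use b in auto)
  have "cmod (\<Sum>j. Kt \<zeta> (Suc j) * complex_of_real (p (sh n j)) * d (sh n j)) \<le> (\<Sum>j. (Mk * B) * \<bar>p (sh n j)\<bar>)"
    by (rule norm_suminf_le[OF b s2])
  also have "\<dots> = Mk * B * Qs n" unfolding Qs_def by (rule suminf_mult[OF psh_summable])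
  finally show "cmod (\<Sum>j. Kt \<zeta> (Suc j) * complex_of_real (p (sh n j)) * d (sh n j)) \<le> Mk * B * Qs n" .
qed

lemma Tj_diff:
  assumes z: "\<zeta> \<in> Dset \<delta>" and "\<And>k. cmod (d1 k) \<le> B1" and "\<And>k. cmod (d2 k) \<le> B2"
  shows "Tj p \<zeta> d1 n - Tj p \<zeta> d2 n = (\<Sum>j. Kt \<zeta> (Suc j) * complex_of_real (p (sh n j)) * (d1 (sh n j) - d2 (sh n j)))"
proof -
  have "Tj p \<zeta> d1 n - Tj p \<zeta> d2 n = (\<Sum>j. Kt \<zeta> (Suc j) * complex_of_real (p (sh n j)) * d1 (sh n j))
     - (\<Sum>j. Kt \<zeta> (Suc j) * complex_of_real (p (sh n j)) * d2 (sh n j))" by (simp add: Tj_def)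
  also have "\<dots> = (\<Sum>j. Kt \<zeta> (Suc j) * complex_of_real (p (sh n j)) * d1 (sh n j)
     - Kt \<zeta> (Suc j) * complex_of_real (p (sh n j)) * d2 (sh n j))"
    by (rule suminf_diff[OF plain_bound(1)[OF z assms(2)] plain_bound(1)[OF z assms(3)]])
  finally show ?thesis by (simp add: algebra_simps)
qed

lemma hit_bounded: assumes z: "\<zeta> \<in> Dset \<delta>" shows "\<exists>B. \<forall>k. cmod (hit p \<zeta> i k) \<le> B"
proof (induction i)
  case 0 then show ?case by (intro exI[of _ 1]) (simp add: hit_0)
next
  case (Suc i)
  then obtain B where B: "\<And>k. cmod (hit p \<zeta> i k) \<le> B" by blast
  have "cmod (hit p \<zeta> (Suc i) k) \<le> 1 + Mk * B * PS" for k
  proof -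
    have "cmod (hit p \<zeta> (Suc i) k) \<le> cmod (1::complex) + cmod (\<Sum>j. Kt \<zeta> (Suc j) * complex_of_real (p (sh k j)) * hit p \<zeta> i (sh k j))"
      unfolding hit_Suc Tj_def by (rule norm_triangle_ineq)
    also have "\<dots> \<le> 1 + Mk * B * Qs k" using plain_bound(2)[OF z B, of k] by simp
    also have "\<dots> \<le> 1 + Mk * B * PS"
    proof -
      have "0 \<le> B" using B[of 0] norm_ge_zero order.trans by blast
      then show ?thesis using Qs_le[of k] Mk_pos by (simp add: mult_left_mono)
    qed
    finally show ?thesis .
  qed
  then show ?case by blast
qed

lemma dif_bound:
  assumes z: "\<zeta> \<in> Dset \<delta>"
  shows "cmod (dif p \<zeta> i n) \<le> (1/2)^(Suc i) * exp (2 * Mk * Qs n)"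
proof (induction i arbitrary: n)
  case 0
  have "dif p \<zeta> 0 n = (\<Sum>j. Kt \<zeta> (Suc j) * complex_of_real (p (sh n j)) * 1)"
    by (simp add: dif_def hit_Suc hit_0 Tj_def)
  also have "cmod \<dots> \<le> 1 / 2 * exp (2 * Mk * Qs n)"
    by (rule contraction(2)[OF z, where d="\<lambda>_. 1"]) (use Mk_pos in \<open>auto simp: Qs_nonneg\<close>)
  finally show ?case by simp
next
  case (Suc i)
  obtain B1 where B1: "\<And>k. cmod (hit p \<zeta> (Suc i) k) \<le> B1" using hit_bounded[OF z] by blast
  obtain B2 where B2: "\<And>k. cmod (hit p \<zeta> i k) \<le> B2" using hit_bounded[OF z] by blast
  have "dif p \<zeta> (Suc i) n = (\<Sum>j. Kt \<zeta> (Suc j) * complex_of_real (p (sh n j)) * (dif p \<zeta> i (sh n j)))"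
    unfolding dif_def hit_Suc[of p \<zeta> "Suc i"] hit_Suc[of p \<zeta> i]
    using Tj_diff[OF z B1 B2, where n=n] by (simp add: hit_Suc)
  also have "cmod \<dots> \<le> (1/2)^(Suc i) / 2 * exp (2 * Mk * Qs n)"
    by (rule contraction(2)[OF z, where d="dif p \<zeta> i"]) (use Suc in auto)
  finally show ?case by simp
qed

lemma exp_Qs_le: "exp (2 * Mk * Qs n) \<le> EE"
  unfolding EE_def using Qs_le[of n] Mk_pos by simp

lemma EE_ge1: "1 \<le> EE"
  unfolding EE_def using PS_nonneg Mk_pos by simp

lemma dif_ubound:
  assumes z: "\<zeta> \<in> Dset \<delta>"
  shows "cmod (dif p \<zeta> i n) \<le> EE * (1/2)^(Suc i)"
proof -
  have "cmod (dif p \<zeta> i n) \<le> (1/2)^(Suc i) * exp (2 * Mk * Qs n)" by (rule dif_bound[OF z])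
  also have "\<dots> \<le> (1/2)^(Suc i) * EE" by (rule mult_left_mono[OF exp_Qs_le]) simp
  finally show ?thesis by (simp add: mult.commute)
qed

lemma geo_sums: "(\<lambda>i. EE * (1/2::real)^(Suc i)) sums EE"
proof -
  have "(\<lambda>i. (1/2::real)^i) sums 2" using geometric_sums[of "1/2::real"] by simp
  then have "(\<lambda>i. EE / 2 * (1/2::real)^i) sums (EE / 2 * 2)" by (rule sums_mult)
  then show ?thesis by simp
qed

lemma dif_summable:
  assumes z: "\<zeta> \<in> Dset \<delta>" shows "summable (\<lambda>i. dif p \<zeta> i n)"
  by (rule summable_comparison_test[OF _ sums_summable[OF geo_sums]]) (use dif_ubound[OF z] in auto)

lemma hit_sum: "hit p \<zeta> i n = 1 + (\<Sum>l<i. dif p \<zeta> l n)"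
  by (induction i) (simp_all add: hit_0 dif_def)

lemma jost_bound:
  assumes z: "\<zeta> \<in> Dset \<delta>" shows "cmod (jost p \<zeta> n) \<le> 1 + EE"
proof -
  have "cmod (\<Sum>i. dif p \<zeta> i n) \<le> (\<Sum>i. EE * (1/2)^(Suc i))"
    by (rule norm_suminf_le[OF dif_ubound[OF z] sums_summable[OF geo_sums]])
  also have "\<dots> = EE" using geo_sums by (simp add: sums_iff)
  finally show ?thesis unfolding jost_def by (metis norm_one norm_triangle_ineq order_trans add_left_mono)
qed

lemma jost_tail:
  assumes z: "\<zeta> \<in> Dset \<delta>" shows "cmod (jost p \<zeta> n - hit p \<zeta> i n) \<le> EE * (1/2)^i"
proof -
  have "jost p \<zeta> n - hit p \<zeta> i n = (\<Sum>l. dif p \<zeta> (l + i) n)"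
    unfolding jost_def hit_sum using suminf_split_initial_segment[OF dif_summable[OF z], of n i] by simp
  also have "cmod \<dots> \<le> (\<Sum>l. EE * (1/2)^(Suc (l + i)))"
    by (rule norm_suminf_le[OF dif_ubound[OF z]]) (use sums_summable[OF geo_sums] summable_iff_shift[of "\<lambda>i. EE * (1/2::real)^(Suc i)" i] in simp)
  also have "\<dots> = (\<Sum>l. (1/2)^i * (EE * (1/2)^(Suc l)))" by (simp add: power_add algebra_simps)
  also have "\<dots> = (1/2)^i * EE" using sums_mult[OF geo_sums, of "(1/2)^i"] by (simp add: sums_iff)
  finally show ?thesis by (simp add: mult.commute)
qed

lemma jost_fix:
  assumes z: "\<zeta> \<in> Dset \<delta>" shows "Tj p \<zeta> (jost p \<zeta>) n = jost p \<zeta> n"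
proof -
  have half: "(\<lambda>i. Mk * (EE * (1/2::real)^i) * Qs n) \<longlonglongrightarrow> 0"
    by (intro tendsto_mult_left_zero tendsto_mult_right_zero LIMSEQ_power_zero) simp
  have half0: "(\<lambda>i. EE * (1/2::real)^i) \<longlonglongrightarrow> 0"
    by (intro tendsto_mult_right_zero LIMSEQ_power_zero) simp
  have l1: "(\<lambda>i. hit p \<zeta> i n) \<longlonglongrightarrow> jost p \<zeta> n"
  proof (rule LIM_zero_cancel, rule Lim_null_comparison[OF _ half0])
    show "\<forall>\<^sub>F i in sequentially. norm (hit p \<zeta> i n - jost p \<zeta> n) \<le> EE * (1/2)^i"
      using jost_tail[OF z] by (simp add: norm_minus_commute)
  qed
  have l2: "(\<lambda>i. hit p \<zeta> (Suc i) n) \<longlonglongrightarrow> Tj p \<zeta> (jost p \<zeta>) n"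
  proof (rule LIM_zero_cancel, rule Lim_null_comparison[OF _ half])
    show "\<forall>\<^sub>F i in sequentially. norm (hit p \<zeta> (Suc i) n - Tj p \<zeta> (jost p \<zeta>) n) \<le> Mk * (EE * (1/2)^i) * Qs n"
    proof (rule always_eventually, rule allI)
      fix i
      obtain B1 where B1: "\<And>k. cmod (hit p \<zeta> i k) \<le> B1" using hit_bounded[OF z] by blast
      have tb: "\<And>k. cmod (hit p \<zeta> i k - jost p \<zeta> k) \<le> EE * (1/2)^i"
        using jost_tail[OF z] by (simp add: norm_minus_commute)
      have "hit p \<zeta> (Suc i) n - Tj p \<zeta> (jost p \<zeta>) n = (\<Sum>j. Kt \<zeta> (Suc j) * complex_of_real (p (sh n j)) * (hit p \<zeta> i (sh n j) - jost p \<zeta> (sh n j)))"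
        unfolding hit_Suc by (rule Tj_diff[OF z B1 jost_bound[OF z]])
      also have "cmod \<dots> \<le> Mk * (EE * (1/2)^i) * Qs n"
        by (rule plain_bound(2)[OF z tb])
      finally show "norm (hit p \<zeta> (Suc i) n - Tj p \<zeta> (jost p \<zeta>) n) \<le> Mk * (EE * (1/2)^i) * Qs n" .
    qed
  qed
  from LIMSEQ_unique[OF l2 LIMSEQ_Suc[OF l1]] show ?thesis .
qed

end


lemma Kt_1: assumes "\<zeta> \<noteq> 0" "\<zeta> - 1/\<zeta> \<noteq> 0" shows "Kt \<zeta> 1 = \<zeta>"
proof -
  have "\<zeta> - 1/\<zeta> = (\<zeta>^2 - 1) / \<zeta>" using assms by (simp add: field_simps power2_eq_square)
  then show ?thesis using assms unfolding Kt_def by (simp add: field_simps)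
qed

lemma Kt_rec: assumes "\<zeta> \<noteq> 0" "\<zeta> - 1/\<zeta> \<noteq> 0"
  shows "\<zeta> * Kt \<zeta> j + Kt \<zeta> (Suc (Suc j)) / \<zeta> - (\<zeta> + 1/\<zeta>) * Kt \<zeta> (Suc j) = 0"
proof -
  define x where "x = \<zeta>^(2*j)"
  have e1: "\<zeta>^(2 * Suc j) = x * \<zeta>^2" by (simp add: x_def power_add mult_Suc_right power2_eq_square)
  have e2: "\<zeta>^(2 * Suc (Suc j)) = x * \<zeta>^4" by (simp add: x_def power_add mult_Suc_right power4_eq_xxxx)
  have "\<zeta> * (x - 1) + (x * \<zeta>^4 - 1) / \<zeta> - (\<zeta> + 1/\<zeta>) * (x * \<zeta>^2 - 1) = 0"
    using assms(1) by (simp add: field_simps power2_eq_square power4_eq_xxxx)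
  then have "(\<zeta> * (x - 1) + (x * \<zeta>^4 - 1) / \<zeta> - (\<zeta> + 1/\<zeta>) * (x * \<zeta>^2 - 1)) / (\<zeta> - 1/\<zeta>) = 0" by simp
  moreover have gen: "\<And>d u v w c. \<zeta>*(u/d) + (v/d)/\<zeta> - c*(w/d) = (\<zeta>*u + v/\<zeta> - c*w)/d"
  proof -
    fix d u v w c :: complex
    show "\<zeta>*(u/d) + (v/d)/\<zeta> - c*(w/d) = (\<zeta>*u + v/\<zeta> - c*w)/d"
      using assms(1) by (cases "d = 0") (simp_all add: field_simps)
  qed
  ultimately show ?thesis unfolding Kt_def e1 e2 x_def[symmetric] by simp
qed

context pot begin

lemma jost_asym:
  assumes z: "\<zeta> \<in> Dset \<delta>" shows "cmod (jost p \<zeta> n - 1) \<le> Mk * (1 + EE) * Qs n"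
proof -
  have "jost p \<zeta> n - 1 = (\<Sum>j. Kt \<zeta> (Suc j) * complex_of_real (p (sh n j)) * jost p \<zeta> (sh n j))"
    using jost_fix[OF z, of n] unfolding Tj_def by (metis add_diff_cancel_left')
  also have "cmod \<dots> \<le> Mk * (1 + EE) * Qs n" by (rule plain_bound(2)[OF z jost_bound[OF z]])
  finally show ?thesis .
qed

lemma jost_lim:
  assumes z: "\<zeta> \<in> Dset \<delta>" shows "(\<lambda>k. jost p \<zeta> (a + int k)) \<longlonglongrightarrow> 1"
proof (rule LIM_zero_cancel, rule Lim_null_comparison)
  show "\<forall>\<^sub>F k in sequentially. norm (jost p \<zeta> (a + int k) - 1) \<le> Mk * (1 + EE) * Qs (a + int k)"
    using jost_asym[OF z] by simp
  show "(\<lambda>k. Mk * (1 + EE) * Qs (a + int k)) \<longlonglongrightarrow> 0"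
    by (intro tendsto_mult_right_zero Qs_tend)
qed

lemma jost_rec:
  assumes z: "\<zeta> \<in> Dset \<delta>"
  shows "\<zeta> * jost p \<zeta> (n+1) + jost p \<zeta> (n-1) / \<zeta> = (\<zeta> + 1/\<zeta> + complex_of_real (p n)) * jost p \<zeta> n"
proof -
  let ?h = "jost p \<zeta>"
  have hb: "\<And>k. cmod (?h k) \<le> 1 + EE" by (rule jost_bound[OF z])
  have z0: "\<zeta> \<noteq> 0" and zd: "\<zeta> - 1/\<zeta> \<noteq> 0" using z dpos by (auto simp: Dset_def)
  define A where "A j = complex_of_real (p (sh n j)) * ?h (sh n j)" for j
  have sumA: "summable (\<lambda>j. c j * A j)" if c: "\<And>j. cmod (c j) \<le> Mk" for c
  proof (rule summable_comparison_test[OF _ summable_mult[OF psh_summable, of "Mk * (1 + EE)" n]])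
    have "cmod (c j * A j) \<le> Mk * (1 + EE) * \<bar>p (sh n j)\<bar>" for j
    proof -
      have "cmod (c j * A j) = cmod (c j) * (\<bar>p (sh n j)\<bar> * cmod (?h (sh n j)))"
        by (simp add: A_def norm_mult)
      also have "\<dots> \<le> Mk * (\<bar>p (sh n j)\<bar> * (1 + EE))"
        by (intro mult_mono c mult_left_mono hb) (use Mk_pos in auto)
      finally show ?thesis by (simp add: algebra_simps)
    qed
    then show "\<exists>N. \<forall>j\<ge>N. cmod (c j * A j) \<le> Mk * (1 + EE) * \<bar>p (sh n j)\<bar>" by blast
  qed
  have KtB: "\<And>m. cmod (Kt \<zeta> m) \<le> Mk" by (rule Kt_bound[OF z])
  have s0: "summable (\<lambda>j. Kt \<zeta> j * A j)" by (rule sumA[OF KtB])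
  have s1: "summable (\<lambda>j. Kt \<zeta> (Suc j) * A j)" by (rule sumA[OF KtB])
  have s2: "summable (\<lambda>j. Kt \<zeta> (Suc (Suc j)) * A j)" by (rule sumA[OF KtB])
  define S0 where "S0 = (\<Sum>j. Kt \<zeta> j * A j)"
  define S1 where "S1 = (\<Sum>j. Kt \<zeta> (Suc j) * A j)"
  define S2 where "S2 = (\<Sum>j. Kt \<zeta> (Suc (Suc j)) * A j)"
  have hn: "?h n = 1 + S1"
    using jost_fix[OF z, of n] unfolding S1_def A_def Tj_def by (simp add: mult.assoc)
  have hn1: "?h (n+1) = 1 + S0"
  proof -
    have "?h (n+1) = 1 + (\<Sum>j. Kt \<zeta> (Suc j) * A (Suc j))"
      using jost_fix[OF z, of "n+1"] unfolding A_def Tj_def sh_Suc by (simp add: mult.assoc)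
    also have "(\<Sum>j. Kt \<zeta> (Suc j) * A (Suc j)) = S0 - Kt \<zeta> 0 * A 0"
      unfolding S0_def by (rule suminf_split_head[OF s0])
    finally show ?thesis by (simp add: Kt_0)
  qed
  define Bf where "Bf j = Kt \<zeta> (Suc j) * (complex_of_real (p (n + int j)) * ?h (n + int j))" for j
  have BfS: "Bf (Suc j) = Kt \<zeta> (Suc (Suc j)) * A j" for j
    by (simp add: Bf_def A_def sh_def add.assoc)
  have sB: "summable Bf" using s2 unfolding BfS[symmetric] by (simp add: summable_Suc_iff)
  have hm1: "?h (n-1) = 1 + (Bf 0 + S2)"
  proof -
    have "?h (n-1) = 1 + suminf Bf"
      using jost_fix[OF z, of "n-1"] unfolding Bf_def Tj_def sh_minus by (simp add: mult.assoc)
    also have "suminf Bf = Bf 0 + S2"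
      using suminf_split_head[OF sB] unfolding S2_def BfS by simp
    finally show ?thesis .
  qed
  have B0: "Bf 0 / \<zeta> = complex_of_real (p n) * ?h n"
    using Kt_1[OF z0 zd] z0 by (simp add: Bf_def)
  have "(\<Sum>j. \<zeta> * (Kt \<zeta> j * A j) + Kt \<zeta> (Suc (Suc j)) * A j / \<zeta> - (\<zeta> + 1/\<zeta>) * (Kt \<zeta> (Suc j) * A j)) = 0"
  proof -
    have "\<And>j. \<zeta> * (Kt \<zeta> j * A j) + Kt \<zeta> (Suc (Suc j)) * A j / \<zeta> - (\<zeta> + 1/\<zeta>) * (Kt \<zeta> (Suc j) * A j)
          = (\<zeta> * Kt \<zeta> j + Kt \<zeta> (Suc (Suc j)) / \<zeta> - (\<zeta> + 1/\<zeta>) * Kt \<zeta> (Suc j)) * A j"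
      by (simp add: algebra_simps)
    then show ?thesis using Kt_rec[OF z0 zd] by simp
  qed
  moreover have "(\<Sum>j. \<zeta> * (Kt \<zeta> j * A j) + Kt \<zeta> (Suc (Suc j)) * A j / \<zeta> - (\<zeta> + 1/\<zeta>) * (Kt \<zeta> (Suc j) * A j))
      = \<zeta> * S0 + S2 / \<zeta> - (\<zeta> + 1/\<zeta>) * S1"
  proof -
    have a: "summable (\<lambda>j. \<zeta> * (Kt \<zeta> j * A j))" by (rule summable_mult[OF s0])
    have b: "summable (\<lambda>j. Kt \<zeta> (Suc (Suc j)) * A j / \<zeta>)" by (rule summable_divide[OF s2])
    have c: "summable (\<lambda>j. (\<zeta> + 1/\<zeta>) * (Kt \<zeta> (Suc j) * A j))" by (rule summable_mult[OF s1])
    have "(\<Sum>j. \<zeta> * (Kt \<zeta> j * A j) + Kt \<zeta> (Suc (Suc j)) * A j / \<zeta> - (\<zeta> + 1/\<zeta>) * (Kt \<zeta> (Suc j) * A j))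
        = (\<Sum>j. \<zeta> * (Kt \<zeta> j * A j) + Kt \<zeta> (Suc (Suc j)) * A j / \<zeta>) - (\<Sum>j. (\<zeta> + 1/\<zeta>) * (Kt \<zeta> (Suc j) * A j))"
      by (rule suminf_diff[OF summable_add[OF a b] c, symmetric])
    also have "(\<Sum>j. \<zeta> * (Kt \<zeta> j * A j) + Kt \<zeta> (Suc (Suc j)) * A j / \<zeta>)
        = (\<Sum>j. \<zeta> * (Kt \<zeta> j * A j)) + (\<Sum>j. Kt \<zeta> (Suc (Suc j)) * A j / \<zeta>)"
      by (rule suminf_add[OF a b, symmetric])
    also have "(\<Sum>j. \<zeta> * (Kt \<zeta> j * A j)) = \<zeta> * S0" unfolding S0_def by (rule suminf_mult[OF s0])
    also have "(\<Sum>j. Kt \<zeta> (Suc (Suc j)) * A j / \<zeta>) = S2 / \<zeta>" unfolding S2_def by (rule suminf_divide[OF s2])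
    also have "(\<Sum>j. (\<zeta> + 1/\<zeta>) * (Kt \<zeta> (Suc j) * A j)) = (\<zeta> + 1/\<zeta>) * S1" unfolding S1_def by (rule suminf_mult[OF s1])
    finally show ?thesis .
  qed
  ultimately have key: "\<zeta> * S0 + S2 / \<zeta> - (\<zeta> + 1/\<zeta>) * S1 = 0" by simp
  have "\<zeta> * ?h (n+1) + ?h (n-1) / \<zeta> = \<zeta> + 1/\<zeta> + Bf 0 / \<zeta> + (\<zeta> * S0 + S2 / \<zeta>)"
    unfolding hn1 hm1 using z0 by (simp add: field_simps)
  also have "\<dots> = \<zeta> + 1/\<zeta> + complex_of_real (p n) * ?h n + (\<zeta> + 1/\<zeta>) * S1"
    using key B0 by (simp add: algebra_simps)
  also have "\<dots> = (\<zeta> + 1/\<zeta> + complex_of_real (p n)) * ?h n"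
    unfolding hn by (simp add: algebra_simps add_divide_distrib)
  finally show ?thesis .
qed

lemma Kt_cont: "continuous_on (Dset \<delta>) (\<lambda>\<zeta>. Kt \<zeta> m)"
proof -
  have "\<And>\<zeta>. \<zeta> \<in> Dset \<delta> \<Longrightarrow> \<zeta> \<noteq> 0 \<and> \<zeta> - 1/\<zeta> \<noteq> 0" using dpos by (auto simp: Dset_def)
  then show ?thesis unfolding Kt_def by (intro continuous_intros) auto
qed

lemma hit_ubound: assumes z: "\<zeta> \<in> Dset \<delta>" shows "cmod (hit p \<zeta> i n) \<le> 1 + EE"
proof -
  have "cmod (\<Sum>l<i. dif p \<zeta> l n) \<le> (\<Sum>l<i. EE * (1/2)^(Suc l))"
    by (rule sum_norm_le) (rule dif_ubound[OF z])
  also have "\<dots> \<le> (\<Sum>l. EE * (1/2)^(Suc l))"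
    by (rule sum_le_suminf[OF sums_summable[OF geo_sums]]) (use EE_ge1 in auto)
  also have "\<dots> = EE" by (rule sums_unique[OF geo_sums, symmetric])
  finally show ?thesis unfolding hit_sum by (metis norm_one norm_triangle_ineq order_trans add_left_mono)
qed

lemma hit_cont: "continuous_on (Dset \<delta>) (\<lambda>\<zeta>. hit p \<zeta> i n)"
proof (induction i arbitrary: n)
  case 0 then show ?case by (simp add: hit_0)
next
  case (Suc i)
  define f where "f j \<zeta> = Kt \<zeta> (Suc j) * complex_of_real (p (sh n j)) * hit p \<zeta> i (sh n j)" for j \<zeta>
  have ul: "uniform_limit (Dset \<delta>) (\<lambda>N \<zeta>. \<Sum>j<N. f j \<zeta>) (\<lambda>\<zeta>. \<Sum>j. f j \<zeta>) sequentially"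
  proof (rule Weierstrass_m_test)
    show "summable (\<lambda>j. Mk * (1 + EE) * \<bar>p (sh n j)\<bar>)" by (rule summable_mult[OF psh_summable])
    fix j \<zeta> assume z: "\<zeta> \<in> Dset \<delta>"
    have "cmod (f j \<zeta>) = cmod (Kt \<zeta> (Suc j)) * (\<bar>p (sh n j)\<bar> * cmod (hit p \<zeta> i (sh n j)))"
      by (simp add: f_def norm_mult)
    also have "\<dots> \<le> Mk * (\<bar>p (sh n j)\<bar> * (1 + EE))"
      by (intro mult_mono Kt_bound z mult_left_mono hit_ubound) (use Mk_pos in auto)
    finally show "norm (f j \<zeta>) \<le> Mk * (1 + EE) * \<bar>p (sh n j)\<bar>" by (simp add: algebra_simps)
  qed
  have "continuous_on (Dset \<delta>) (\<lambda>\<zeta>. \<Sum>j. f j \<zeta>)"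
  proof (rule uniform_limit_theorem[OF _ ul])
    show "\<forall>\<^sub>F N in sequentially. continuous_on (Dset \<delta>) (\<lambda>\<zeta>. \<Sum>j<N. f j \<zeta>)"
      unfolding f_def by (intro always_eventually allI continuous_intros Kt_cont Suc.IH)
  qed simp
  then have c: "continuous_on (Dset \<delta>) (\<lambda>\<zeta>. 1 + (\<Sum>j. f j \<zeta>))" by (intro continuous_intros)
  have eq: "(\<lambda>\<zeta>. hit p \<zeta> (Suc i) n) = (\<lambda>\<zeta>. 1 + (\<Sum>j. f j \<zeta>))"
    by (simp add: hit_Suc Tj_def f_def)
  show ?case unfolding eq by (rule c)
qed

lemma jost_cont: "continuous_on (Dset \<delta>) (\<lambda>\<zeta>. jost p \<zeta> n)"
proof -
  have ul: "uniform_limit (Dset \<delta>) (\<lambda>N \<zeta>. \<Sum>l<N. dif p \<zeta> l n) (\<lambda>\<zeta>. \<Sum>l. dif p \<zeta> l n) sequentially"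
    by (rule Weierstrass_m_test[OF dif_ubound sums_summable[OF geo_sums]])
  have "continuous_on (Dset \<delta>) (\<lambda>\<zeta>. \<Sum>l. dif p \<zeta> l n)"
  proof (rule uniform_limit_theorem[OF _ ul])
    show "\<forall>\<^sub>F N in sequentially. continuous_on (Dset \<delta>) (\<lambda>\<zeta>. \<Sum>l<N. dif p \<zeta> l n)"
      unfolding dif_def by (intro always_eventually allI continuous_intros hit_cont)
  qed simp
  then show ?thesis unfolding jost_def by (intro continuous_intros)
qed

end


definition fp :: "(int \<Rightarrow> real) \<Rightarrow> complex \<Rightarrow> int \<Rightarrow> complex" where
  "fp q \<zeta> n = \<zeta> powi n * jost q \<zeta> n"
definition fm :: "(int \<Rightarrow> real) \<Rightarrow> complex \<Rightarrow> int \<Rightarrow> complex" where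
  "fm q \<zeta> n = \<zeta> powi (-n) * jost (\<lambda>k. q (-k)) \<zeta> (-n)"
definition Wr :: "(int \<Rightarrow> complex) \<Rightarrow> (int \<Rightarrow> complex) \<Rightarrow> int \<Rightarrow> complex" where
  "Wr u v m = u m * v (m+1) - u (m+1) * v m"
definition Wq :: "(int \<Rightarrow> real) \<Rightarrow> complex \<Rightarrow> complex" where
  "Wq q \<zeta> = Wr (fp q \<zeta>) (fm q \<zeta>) 0"
definition Gr :: "(int \<Rightarrow> real) \<Rightarrow> complex \<Rightarrow> int \<Rightarrow> int \<Rightarrow> complex" where
  "Gr q \<zeta> n m = fp q \<zeta> (max n m) * fm q \<zeta> (min n m) / Wq q \<zeta>"

lemma wr_const:
  assumes u: "\<And>n. u (n+1) + u (n-1) = c n * u n" and v: "\<And>n. v (n+1) + v (n-1) = c n * v n"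
  shows "Wr u v m = Wr u v 0"
proof -
  have step: "Wr u v i = Wr u v (i - 1)" for i
  proof -
    have "Wr u v i - Wr u v (i - 1) = u i * (v (i+1) + v (i-1)) - v i * (u (i+1) + u (i-1))"
      by (simp add: Wr_def algebra_simps)
    also have "\<dots> = 0" by (simp add: u v)
    finally show ?thesis by simp
  qed
  show ?thesis
  proof (induction m rule: int_induct[where k=0])
    case base then show ?case by simp
  next
    case (step1 i) then show ?case using step[of "i+1"] by simp
  next
    case (step2 i) then show ?case using step[of i] by simp
  qed
qed

lemma hop_eq:
  "Hop q u n - (2 - \<zeta> - 1/\<zeta>) * u n = (\<zeta> + 1/\<zeta> + complex_of_real (q n)) * u n - u (n+1) - u (n-1)"
  by (simp add: Hop_def algebra_simps)

lemma pw_nat: fixes \<zeta> :: complex assumes "\<zeta> \<noteq> 0" "m \<le> n" shows "\<zeta> powi n * \<zeta> powi (-m) = \<zeta> ^ nat (n - m)"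
proof -
  have "\<zeta> powi n * \<zeta> powi (-m) = \<zeta> powi (n + - m)" using power_int_add[of \<zeta> n "-m"] assms by simp
  also have "n + - m = int (nat (n - m))" using assms by simp
  finally show ?thesis by (simp only: power_int_of_nat)
qed

locale qpot =
  fixes q :: "int \<Rightarrow> real" and \<delta> :: real
  assumes qsum: "(\<lambda>n. \<bar>q n\<bar>) summable_on UNIV" and dpos': "0 < \<delta>"
begin

sublocale P: pot q \<delta> by (unfold_locales) (rule qsum, rule dpos')

lemma rsum: "(\<lambda>n. \<bar>q (-n)\<bar>) summable_on UNIV"
proof -
  have "inj (uminus :: int \<Rightarrow> int)" by simp
  then have "(\<lambda>n. \<bar>q n\<bar>) summable_on range uminus \<longleftrightarrow> ((\<lambda>n. \<bar>q n\<bar>) \<circ> uminus) summable_on UNIV"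
    by (rule summable_on_reindex)
  moreover have "range (uminus :: int \<Rightarrow> int) = UNIV" by (metis surj_def minus_minus)
  ultimately show ?thesis using qsum by (simp add: o_def)
qed

sublocale R: pot "\<lambda>k. q (-k)" \<delta> by (unfold_locales) (rule rsum, rule dpos')

lemma D_nz: assumes "\<zeta> \<in> Dset \<delta>" shows "\<zeta> \<noteq> 0" using assms by (simp add: Dset_def)

lemma fp_rec:
  assumes z: "\<zeta> \<in> Dset \<delta>"
  shows "fp q \<zeta> (n+1) + fp q \<zeta> (n-1) = (\<zeta> + 1/\<zeta> + complex_of_real (q n)) * fp q \<zeta> n"
proof -
  have z0: "\<zeta> \<noteq> 0" by (rule D_nz[OF z])
  have a: "\<zeta> powi (n+1) = \<zeta> powi n * \<zeta>" using power_int_add[of \<zeta> n 1] z0 by simp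
  have b: "\<zeta> powi (n-1) = \<zeta> powi n / \<zeta>" using power_int_diff[of \<zeta> n 1] z0 by simp
  have "fp q \<zeta> (n+1) + fp q \<zeta> (n-1) = \<zeta> powi n * (\<zeta> * jost q \<zeta> (n+1) + jost q \<zeta> (n-1) / \<zeta>)"
    unfolding fp_def a b by (simp add: algebra_simps)
  also have "\<dots> = \<zeta> powi n * ((\<zeta> + 1/\<zeta> + complex_of_real (q n)) * jost q \<zeta> n)"
    by (simp only: P.jost_rec[OF z])
  finally show ?thesis by (simp add: fp_def algebra_simps)
qed

lemma fm_rec:
  assumes z: "\<zeta> \<in> Dset \<delta>"
  shows "fm q \<zeta> (n+1) + fm q \<zeta> (n-1) = (\<zeta> + 1/\<zeta> + complex_of_real (q n)) * fm q \<zeta> n"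
proof -
  have z0: "\<zeta> \<noteq> 0" by (rule D_nz[OF z])
  let ?j = "jost (\<lambda>k. q (-k)) \<zeta>"
  have a: "\<zeta> powi ((-n) - 1) = \<zeta> powi (-n) / \<zeta>" using power_int_diff[of \<zeta> "-n" 1] z0 by simp
  have b: "\<zeta> powi ((-n) + 1) = \<zeta> powi (-n) * \<zeta>" using power_int_add[of \<zeta> "-n" 1] z0 by simp
  have e1: "-(n+1) = (-n) - 1" and e2: "-(n-1) = (-n) + 1" by simp_all
  have f1: "fm q \<zeta> (n+1) = \<zeta> powi (-n) / \<zeta> * ?j ((-n) - 1)" unfolding fm_def e1 a ..
  have f2: "fm q \<zeta> (n-1) = \<zeta> powi (-n) * \<zeta> * ?j ((-n) + 1)" unfolding fm_def e2 b ..
  have "fm q \<zeta> (n+1) + fm q \<zeta> (n-1) = \<zeta> powi (-n) * (\<zeta> * ?j ((-n)+1) + ?j ((-n)-1) / \<zeta>)"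
    unfolding f1 f2 by (simp add: algebra_simps)
  also have "\<dots> = \<zeta> powi (-n) * ((\<zeta> + 1/\<zeta> + complex_of_real (q (-(-n)))) * ?j (-n))"
    by (simp only: R.jost_rec[OF z])
  finally show ?thesis by (simp add: fm_def algebra_simps)
qed

lemma W_const: assumes z: "\<zeta> \<in> Dset \<delta>" shows "Wr (fp q \<zeta>) (fm q \<zeta>) m = Wq q \<zeta>"
  unfolding Wq_def by (rule wr_const[OF fp_rec[OF z] fm_rec[OF z]])

lemma green:
  assumes z: "\<zeta> \<in> Dset \<delta>" and W: "Wq q \<zeta> \<noteq> 0"
  shows "(\<zeta> + 1/\<zeta> + complex_of_real (q n)) * Gr q \<zeta> n m - Gr q \<zeta> (n+1) m - Gr q \<zeta> (n-1) m
         = (if n = m then 1 else 0)"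
proof -
  let ?c = "\<zeta> + 1/\<zeta> + complex_of_real (q n)"
  let ?F = "fp q \<zeta>" and ?M = "fm q \<zeta>" and ?W = "Wq q \<zeta>"
  consider "m < n" | "n < m" | "n = m" by linarith
  then show ?thesis
  proof cases
    case 1
    then have "max (n-1) m = n-1" "min (n-1) m = m" by simp_all
    with 1 have "Gr q \<zeta> n m = ?F n * ?M m / ?W" "Gr q \<zeta> (n+1) m = ?F (n+1) * ?M m / ?W"
      "Gr q \<zeta> (n-1) m = ?F (n-1) * ?M m / ?W" by (simp_all add: Gr_def max_def min_def)
    then have "?c * Gr q \<zeta> n m - Gr q \<zeta> (n+1) m - Gr q \<zeta> (n-1) m = ?M m * (?c * ?F n - (?F (n+1) + ?F (n-1))) / ?W"
      using W by (simp add: field_simps)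
    also have "\<dots> = 0" by (simp add: fp_rec[OF z])
    finally show ?thesis using 1 by simp
  next
    case 2
    then have "max (n+1) m = m" "min (n+1) m = n+1" by simp_all
    with 2 have "Gr q \<zeta> n m = ?F m * ?M n / ?W" "Gr q \<zeta> (n+1) m = ?F m * ?M (n+1) / ?W"
      "Gr q \<zeta> (n-1) m = ?F m * ?M (n-1) / ?W" by (simp_all add: Gr_def max_def min_def)
    then have "?c * Gr q \<zeta> n m - Gr q \<zeta> (n+1) m - Gr q \<zeta> (n-1) m = ?F m * (?c * ?M n - (?M (n+1) + ?M (n-1))) / ?W"
      using W by (simp add: field_simps)
    also have "\<dots> = 0" by (simp add: fm_rec[OF z])
    finally show ?thesis using 2 by simp
  next
    case 3
    then have "Gr q \<zeta> n m = ?F n * ?M n / ?W" "Gr q \<zeta> (n+1) m = ?F (n+1) * ?M n / ?W"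
      "Gr q \<zeta> (n-1) m = ?F n * ?M (n-1) / ?W" by (simp_all add: Gr_def max_def min_def)
    then have "?c * Gr q \<zeta> n m - Gr q \<zeta> (n+1) m - Gr q \<zeta> (n-1) m
        = (?F n * (?c * ?M n - ?M (n-1)) - ?F (n+1) * ?M n) / ?W"
      using W by (simp add: field_simps)
    also have "?c * ?M n - ?M (n-1) = ?M (n+1)" using fm_rec[OF z, of n] by (simp add: algebra_simps)
    also have "?F n * ?M (n+1) - ?F (n+1) * ?M n = ?W" using W_const[OF z, of n] by (simp add: Wr_def)
    finally show ?thesis using 3 W by simp
  qed
qed

lemma Gr_bound:
  assumes z: "\<zeta> \<in> Dset \<delta>"
  shows "cmod (Gr q \<zeta> n m) \<le> (1 + P.EE) * (1 + R.EE) / cmod (Wq q \<zeta>) * cmod \<zeta> ^ nat \<bar>n - m\<bar>"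
proof -
  have z0: "\<zeta> \<noteq> 0" by (rule D_nz[OF z])
  let ?a = "max n m" and ?b = "min n m"
  have "fp q \<zeta> ?a * fm q \<zeta> ?b = (\<zeta> powi ?a * \<zeta> powi (-?b)) * (jost q \<zeta> ?a * jost (\<lambda>k. q (-k)) \<zeta> (-?b))"
    by (simp add: fp_def fm_def algebra_simps)
  also have "\<zeta> powi ?a * \<zeta> powi (-?b) = \<zeta> ^ nat \<bar>n - m\<bar>"
  proof -
    have "nat (?a - ?b) = nat \<bar>n - m\<bar>" by (simp add: max_def min_def)
    then show ?thesis using pw_nat[OF z0, of ?b ?a] by simp
  qed
  finally have e: "fp q \<zeta> ?a * fm q \<zeta> ?b = \<zeta> ^ nat \<bar>n - m\<bar> * (jost q \<zeta> ?a * jost (\<lambda>k. q (-k)) \<zeta> (-?b))" .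
  have "cmod (fp q \<zeta> ?a * fm q \<zeta> ?b) \<le> cmod \<zeta> ^ nat \<bar>n - m\<bar> * ((1 + P.EE) * (1 + R.EE))"
    unfolding e norm_mult norm_power
    by (intro mult_left_mono mult_mono P.jost_bound[OF z] R.jost_bound[OF z]) (use P.EE_ge1 in auto)
  then show ?thesis unfolding Gr_def norm_divide
    by (simp add: divide_right_mono field_simps)
qed

end


lemma plucker:
  fixes a b c d :: "int \<Rightarrow> complex"
  shows "Wr a b m * Wr c d m - Wr a c m * Wr b d m + Wr a d m * Wr b c m = 0"
  unfolding Wr_def by algebra

context qpot begin

lemma W_nonzero:
  assumes z: "\<zeta> \<in> Dset \<delta>" and u1: "cmod \<zeta> = 1"
  shows "Wq q \<zeta> \<noteq> 0"
proof
  assume W0: "Wq q \<zeta> = 0"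
  have z0: "\<zeta> \<noteq> 0" by (rule D_nz[OF z])
  have zc: "\<zeta> * cnj \<zeta> = 1" using complex_norm_square[of \<zeta>] u1 by simp
  have ic: "1/\<zeta> = cnj \<zeta>" using zc z0 by (simp add: field_simps)
  define c where "c n = \<zeta> + 1/\<zeta> + complex_of_real (q n)" for n
  have creal: "cnj (c n) = c n" for n unfolding c_def ic by simp
  let ?F = "fp q \<zeta>" and ?M = "fm q \<zeta>"
  let ?cF = "\<lambda>n. cnj (fp q \<zeta> n)" and ?cM = "\<lambda>n. cnj (fm q \<zeta> n)"
  have rF: "\<And>n. ?F (n+1) + ?F (n-1) = c n * ?F n" unfolding c_def by (rule fp_rec[OF z])
  have rM: "\<And>n. ?M (n+1) + ?M (n-1) = c n * ?M n" unfolding c_def by (rule fm_rec[OF z])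
  have rcF: "?cF (n+1) + ?cF (n-1) = c n * ?cF n" for n
  proof -
    have "cnj (?F (n+1) + ?F (n-1)) = cnj (c n * ?F n)" by (simp only: rF)
    then show ?thesis by (simp only: complex_cnj_add complex_cnj_mult creal)
  qed
  have rcM: "?cM (n+1) + ?cM (n-1) = c n * ?cM n" for n
  proof -
    have "cnj (?M (n+1) + ?M (n-1)) = cnj (c n * ?M n)" by (simp only: rM)
    then show ?thesis by (simp only: complex_cnj_add complex_cnj_mult creal)
  qed
  have upow: "\<zeta> powi m * cnj (\<zeta> powi m) = 1" for m
  proof -
    have "\<zeta> powi m * cnj (\<zeta> powi m) = complex_of_real ((cmod (\<zeta> powi m))\<^sup>2)"
      by (rule complex_norm_square[symmetric])
    also have "cmod (\<zeta> powi m) = 1" by (simp add: norm_power_int u1)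
    finally show ?thesis by simp
  qed
  let ?J = "jost q \<zeta>" and ?Jr = "jost (\<lambda>k. q (-k)) \<zeta>"
  have wF: "Wr ?F ?cF m = cnj \<zeta> * ?J m * cnj (?J (m+1)) - \<zeta> * ?J (m+1) * cnj (?J m)" for m
  proof -
    define u where "u = \<zeta> powi m"
    have uu: "u * cnj u = 1" unfolding u_def by (rule upow)
    have f0: "?F m = u * ?J m" by (simp add: fp_def u_def)
    have f1: "?F (m+1) = u * \<zeta> * ?J (m+1)"
      using power_int_add[of \<zeta> m 1] z0 by (simp add: fp_def u_def)
    have "Wr ?F ?cF m = (u * cnj u) * (cnj \<zeta> * ?J m * cnj (?J (m+1))) - (u * cnj u) * (\<zeta> * ?J (m+1) * cnj (?J m))"
      unfolding Wr_def f0 f1 by (simp add: algebra_simps)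
    then show ?thesis using uu by simp
  qed
  have wM: "Wr ?M ?cM m = \<zeta> * ?Jr (-m) * cnj (?Jr (-m-1)) - cnj \<zeta> * ?Jr (-m-1) * cnj (?Jr (-m))" for m
  proof -
    define v where "v = \<zeta> powi (-m)"
    have vv: "v * cnj v = 1" unfolding v_def by (rule upow)
    have f0: "?M m = v * ?Jr (-m)" by (simp add: fm_def v_def)
    have pw: "\<zeta> powi (-m - 1) = \<zeta> powi (-m) / \<zeta>" using power_int_diff[of \<zeta> "-m" 1] z0 by simp
    have e: "-(m+1) = -m - 1" by simp
    have f1: "?M (m+1) = v * cnj \<zeta> * ?Jr (-m-1)"
      unfolding fm_def e pw v_def ic[symmetric] by (simp add: divide_inverse)
    have "Wr ?M ?cM m = (v * cnj v) * (\<zeta> * ?Jr (-m) * cnj (?Jr (-m-1)))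
        - (v * cnj v) * (cnj \<zeta> * ?Jr (-m-1) * cnj (?Jr (-m)))"
      unfolding Wr_def f0 f1 by (simp add: algebra_simps)
    then show ?thesis using vv zc by simp
  qed
  have P0: "?J \<in> UNIV" by simp
  have A: "Wr ?F ?cF 0 = cnj \<zeta> - \<zeta>"
  proof -
    have l0: "(\<lambda>k. ?J (0 + int k)) \<longlonglongrightarrow> 1" by (rule P.jost_lim[OF z])
    have l1: "(\<lambda>k. ?J (1 + int k)) \<longlonglongrightarrow> 1" by (rule P.jost_lim[OF z])
    have "(\<lambda>k. cnj \<zeta> * ?J (0 + int k) * cnj (?J (1 + int k)) - \<zeta> * ?J (1 + int k) * cnj (?J (0 + int k)))
        \<longlonglongrightarrow> cnj \<zeta> * 1 * cnj 1 - \<zeta> * 1 * cnj 1"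
      by (intro tendsto_intros l0 l1)
    moreover have "(\<lambda>k. cnj \<zeta> * ?J (0 + int k) * cnj (?J (1 + int k)) - \<zeta> * ?J (1 + int k) * cnj (?J (0 + int k)))
        = (\<lambda>k. Wr ?F ?cF 0)"
    proof
      fix k
      have "Wr ?F ?cF (int k) = Wr ?F ?cF 0" by (rule wr_const[OF rF rcF])
      then show "cnj \<zeta> * ?J (0 + int k) * cnj (?J (1 + int k)) - \<zeta> * ?J (1 + int k) * cnj (?J (0 + int k)) = Wr ?F ?cF 0"
        using wF[of "int k"] by (simp add: add.commute)
    qed
    ultimately have "(\<lambda>k. Wr ?F ?cF 0) \<longlonglongrightarrow> cnj \<zeta> - \<zeta>" by simp
    then show ?thesis using LIMSEQ_const_iff by blast
  qed
  have B: "Wr ?M ?cM 0 = \<zeta> - cnj \<zeta>"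
  proof -
    have l0: "(\<lambda>k. ?Jr (0 + int k)) \<longlonglongrightarrow> 1" by (rule R.jost_lim[OF z])
    have l1: "(\<lambda>k. ?Jr (-1 + int k)) \<longlonglongrightarrow> 1" by (rule R.jost_lim[OF z])
    have "(\<lambda>k. \<zeta> * ?Jr (0 + int k) * cnj (?Jr (-1 + int k)) - cnj \<zeta> * ?Jr (-1 + int k) * cnj (?Jr (0 + int k)))
        \<longlonglongrightarrow> \<zeta> * 1 * cnj 1 - cnj \<zeta> * 1 * cnj 1"
      by (intro tendsto_intros l0 l1)
    moreover have "(\<lambda>k. \<zeta> * ?Jr (0 + int k) * cnj (?Jr (-1 + int k)) - cnj \<zeta> * ?Jr (-1 + int k) * cnj (?Jr (0 + int k)))
        = (\<lambda>k. Wr ?M ?cM 0)"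
    proof
      fix k
      have "Wr ?M ?cM (- int k) = Wr ?M ?cM 0" by (rule wr_const[OF rM rcM])
      moreover have "- (- int k) - 1 = -1 + int k" by simp
      ultimately show "\<zeta> * ?Jr (0 + int k) * cnj (?Jr (-1 + int k)) - cnj \<zeta> * ?Jr (-1 + int k) * cnj (?Jr (0 + int k)) = Wr ?M ?cM 0"
        using wM[of "- int k"] by simp
    qed
    ultimately have "(\<lambda>k. Wr ?M ?cM 0) \<longlonglongrightarrow> \<zeta> - cnj \<zeta>" by simp
    then show ?thesis using LIMSEQ_const_iff by blast
  qed
  have W: "Wr ?F ?M 0 = 0" using W0 by (simp add: Wq_def)
  have cW: "Wr ?cF ?cM 0 = cnj (Wr ?F ?M 0)" by (simp add: Wr_def)
  define X where "X = Wr ?F ?cM 0"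
  have cX: "Wr ?cF ?M 0 = cnj X" by (simp add: Wr_def X_def)
  have "Wr ?F ?cF 0 * Wr ?M ?cM 0 - Wr ?F ?M 0 * Wr ?cF ?cM 0 + Wr ?F ?cM 0 * Wr ?cF ?M 0 = 0"
    by (rule plucker)
  then have "(cnj \<zeta> - \<zeta>) * (\<zeta> - cnj \<zeta>) + X * cnj X = 0"
    unfolding A B cW W cX X_def[symmetric] by simp
  moreover have "(cnj \<zeta> - \<zeta>) * (\<zeta> - cnj \<zeta>) = complex_of_real (4 * (Im \<zeta>)\<^sup>2)"
    by (simp add: complex_eq_iff power2_eq_square)
  moreover have "X * cnj X = complex_of_real ((cmod X)\<^sup>2)" by (rule complex_norm_square[symmetric])
  ultimately have "complex_of_real (4 * (Im \<zeta>)\<^sup>2 + (cmod X)\<^sup>2) = 0" by simp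
  then have "4 * (Im \<zeta>)\<^sup>2 + (cmod X)\<^sup>2 = 0" by (simp only: of_real_eq_0_iff)
  then have "Im \<zeta> = 0" by (smt (verit) zero_le_power2 power2_eq_square mult_eq_0_iff)
  then have "\<zeta> - 1/\<zeta> = 0" unfolding ic complex_diff_cnj by simp
  then show False using z dpos' by (simp add: Dset_def)
qed

end


abbreviation vw :: "real \<Rightarrow> int \<Rightarrow> real" where
  "vw s n \<equiv> (1 + real_of_int \<bar>n\<bar>) powr (2 * s)"

lemma vw_pos: "0 < vw s n" by simp

lemma vw_mult: "vw (-s) n * vw s n = 1"
proof -
  have "vw (-s) n * vw s n = (1 + real_of_int \<bar>n\<bar>) powr (2 * (-s) + 2 * s)"
    by (rule powr_add[symmetric])
  also have "\<dots> = 1" by (simp add: add_pos_nonneg)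
  finally show ?thesis .
qed

lemma vw_summable: assumes "\<sigma> > 1/2" shows "vw (-\<sigma>) summable_on UNIV"
proof -
  have s: "summable (\<lambda>n::nat. real n powr (2 * - \<sigma>))" using assms by (simp add: summable_real_powr_iff)
  have s1: "summable (\<lambda>n::nat. real (n + 1) powr (2 * - \<sigma>))"
    using summable_iff_shift[where f="\<lambda>n::nat. real n powr (2 * - \<sigma>)" and k=1] s by simp
  have e1: "(\<lambda>n::nat. vw (-\<sigma>) (int n)) = (\<lambda>n::nat. real (n + 1) powr (2 * - \<sigma>))"
    by (simp add: add.commute)
  have e2: "(\<lambda>n::nat. vw (-\<sigma>) (- int n)) = (\<lambda>n::nat. real (n + 1) powr (2 * - \<sigma>))"
    by (simp add: add.commute)
  show ?thesis by (rule int_summable_from_nat) (use s1 e1 e2 in auto)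
qed

lemma cs_weighted:
  fixes f :: "int \<Rightarrow> complex" and A :: "int \<Rightarrow> real"
  assumes f: "l2w \<sigma> f" and A: "(\<lambda>m. vw (-\<sigma>) m * (A m)\<^sup>2) summable_on UNIV" and An: "\<And>m. A m \<ge> 0"
  shows "(\<lambda>m. A m * cmod (f m)) summable_on UNIV"
    "infsum (\<lambda>m. A m * cmod (f m)) UNIV \<le> sqrt (infsum (\<lambda>m. vw (-\<sigma>) m * (A m)\<^sup>2) UNIV) * wnorm \<sigma> f"
proof -
  define a where "a m = sqrt (vw (-\<sigma>) m) * A m" for m
  define b where "b m = sqrt (vw \<sigma> m) * cmod (f m)" for m
  have a2: "(\<lambda>m. (a m)\<^sup>2) = (\<lambda>m. vw (-\<sigma>) m * (A m)\<^sup>2)" by (simp add: a_def power_mult_distrib)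
  have b2: "(\<lambda>m. (b m)\<^sup>2) = (\<lambda>m. vw \<sigma> m * (cmod (f m))\<^sup>2)" by (simp add: b_def power_mult_distrib)
  have ab: "(\<lambda>m. a m * b m) = (\<lambda>m. A m * cmod (f m))"
  proof
    fix m
    have "a m * b m = (sqrt (vw (-\<sigma>) m) * sqrt (vw \<sigma> m)) * (A m * cmod (f m))"
      by (simp add: a_def b_def algebra_simps)
    also have "sqrt (vw (-\<sigma>) m) * sqrt (vw \<sigma> m) = 1"
      by (simp only: real_sqrt_mult[symmetric] vw_mult real_sqrt_one)
    finally show "a m * b m = A m * cmod (f m)" by simp
  qed
  have sa: "(\<lambda>m. (a m)\<^sup>2) summable_on UNIV" unfolding a2 by (rule A)
  have sb: "(\<lambda>m. (b m)\<^sup>2) summable_on UNIV" unfolding b2 using f by (simp add: l2w_def)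
  have an: "\<And>m. a m \<ge> 0" using An by (simp add: a_def)
  have bn: "\<And>m. b m \<ge> 0" by (simp add: b_def)
  show "(\<lambda>m. A m * cmod (f m)) summable_on UNIV" using infsum_CS(1)[OF sa sb an bn] unfolding ab .
  show "infsum (\<lambda>m. A m * cmod (f m)) UNIV \<le> sqrt (infsum (\<lambda>m. vw (-\<sigma>) m * (A m)\<^sup>2) UNIV) * wnorm \<sigma> f"
    using infsum_CS(2)[OF sa sb an bn] unfolding ab a2 b2 wnorm_def .
qed

lemma l1_of_l2w:
  fixes f :: "int \<Rightarrow> complex"
  assumes "\<sigma> > 1/2" "l2w \<sigma> f"
  shows "(\<lambda>m. cmod (f m)) summable_on UNIV"
  using cs_weighted(1)[OF assms(2), of "\<lambda>_. 1"] vw_summable[OF assms(1)] by simp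

definition HS :: "real \<Rightarrow> (int \<Rightarrow> int \<Rightarrow> complex) \<Rightarrow> real" where
  "HS \<sigma> K = infsum (\<lambda>n. vw (-\<sigma>) n * infsum (\<lambda>m. vw (-\<sigma>) m * (cmod (K n m))\<^sup>2) UNIV) UNIV"

definition kapp :: "(int \<Rightarrow> int \<Rightarrow> complex) \<Rightarrow> (int \<Rightarrow> complex) \<Rightarrow> int \<Rightarrow> complex" where
  "kapp K f n = infsum (\<lambda>m. K n m * f m) UNIV"

lemma kapp_summable:
  assumes "\<sigma> > 1/2" "l2w \<sigma> f" "\<And>n m. cmod (K n m) \<le> C"
  shows "(\<lambda>m. K n m * f m) summable_on UNIV"
proof -
  have l1: "(\<lambda>m. cmod (f m)) summable_on UNIV" by (rule l1_of_l2w[OF assms(1,2)])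
  have "(\<lambda>m. C * cmod (f m)) summable_on UNIV" by (rule summable_on_cmult_right[OF l1])
  then have "(\<lambda>m. norm (K n m * f m)) summable_on UNIV"
  proof (rule summable_on_comparison_test)
    fix m show "norm (K n m * f m) \<le> C * cmod (f m)"
      unfolding norm_mult by (rule mult_right_mono[OF assms(3)]) simp
  qed simp
  then show ?thesis by (rule abs_summable_summable)
qed

lemma kapp_HS:
  fixes f :: "int \<Rightarrow> complex"
  assumes s: "\<sigma> > 1/2" and f: "l2w \<sigma> f" and K: "\<And>n m. cmod (K n m) \<le> C"
  shows "l2w (-\<sigma>) (kapp K f)" "wnorm (-\<sigma>) (kapp K f) \<le> sqrt (HS \<sigma> K) * wnorm \<sigma> f"
    "0 \<le> HS \<sigma> K"
proof -
  have C: "0 \<le> C" using K[of 0 0] norm_ge_zero order.trans by blast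
  have vs: "vw (-\<sigma>) summable_on UNIV" by (rule vw_summable[OF s])
  define V where "V = infsum (vw (-\<sigma>)) UNIV"
  define W where "W = wnorm \<sigma> f"
  define \<psi> where "\<psi> n = infsum (\<lambda>m. vw (-\<sigma>) m * (cmod (K n m))\<^sup>2) UNIV" for n
  have Ksq: "vw (-\<sigma>) m * (cmod (K n m))\<^sup>2 \<le> C\<^sup>2 * vw (-\<sigma>) m" for n m
  proof -
    have "(cmod (K n m))\<^sup>2 \<le> C\<^sup>2" by (rule power_mono[OF K norm_ge_zero])
    then have "vw (-\<sigma>) m * (cmod (K n m))\<^sup>2 \<le> vw (-\<sigma>) m * C\<^sup>2"
      by (rule mult_left_mono) simp
    then show ?thesis by (simp only: mult.commute)
  qed
  have row: "(\<lambda>m. vw (-\<sigma>) m * (cmod (K n m))\<^sup>2) summable_on UNIV" for n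
  proof (rule summable_on_comparison_test)
    show "(\<lambda>m. C\<^sup>2 * vw (-\<sigma>) m) summable_on UNIV" by (rule summable_on_cmult_right[OF vs])
    fix m show "vw (-\<sigma>) m * (cmod (K n m))\<^sup>2 \<le> C\<^sup>2 * vw (-\<sigma>) m" by (rule Ksq)
  qed simp
  have \<psi>b: "\<psi> n \<le> C\<^sup>2 * V" for n
  proof -
    have "\<psi> n \<le> infsum (\<lambda>m. C\<^sup>2 * vw (-\<sigma>) m) UNIV"
      unfolding \<psi>_def
    proof (rule infsum_mono[OF row summable_on_cmult_right[OF vs]])
      fix m show "vw (-\<sigma>) m * (cmod (K n m))\<^sup>2 \<le> C\<^sup>2 * vw (-\<sigma>) m" by (rule Ksq)
    qed
    also have "\<dots> = C\<^sup>2 * V" unfolding V_def by (rule infsum_cmult_right) (use vs in simp)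
    finally show ?thesis .
  qed
  have \<psi>n: "0 \<le> \<psi> n" for n unfolding \<psi>_def by (rule infsum_nonneg) simp
  have pt: "cmod (kapp K f n) \<le> sqrt (\<psi> n) * W" for n
  proof -
    have sm: "(\<lambda>m. K n m * f m) summable_on UNIV" by (rule kapp_summable[OF s f K])
    have sA: "(\<lambda>m. vw (-\<sigma>) m * (cmod (K n m))\<^sup>2) summable_on UNIV" by (rule row)
    have "cmod (kapp K f n) \<le> infsum (\<lambda>m. norm (K n m * f m)) UNIV"
      unfolding kapp_def by (rule norm_infsum_bound[OF summable_on_iff_abs_summable_on_complex[THEN iffD1, OF sm]])
    also have "\<dots> = infsum (\<lambda>m. cmod (K n m) * cmod (f m)) UNIV" by (simp add: norm_mult)
    also have "\<dots> \<le> sqrt (\<psi> n) * W" unfolding \<psi>_def W_def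
      by (rule cs_weighted(2)[OF f sA]) simp
    finally show ?thesis .
  qed
  have sv\<psi>: "(\<lambda>n. vw (-\<sigma>) n * \<psi> n) summable_on UNIV"
  proof (rule summable_on_comparison_test)
    show "(\<lambda>n. C\<^sup>2 * V * vw (-\<sigma>) n) summable_on UNIV" by (rule summable_on_cmult_right[OF vs])
    fix n show "vw (-\<sigma>) n * \<psi> n \<le> C\<^sup>2 * V * vw (-\<sigma>) n"
    proof -
      have "vw (-\<sigma>) n * \<psi> n \<le> vw (-\<sigma>) n * (C\<^sup>2 * V)"
        by (rule mult_left_mono[OF \<psi>b less_imp_le[OF vw_pos]])
      then show ?thesis by (simp add: ac_simps)
    qed
    show "0 \<le> vw (-\<sigma>) n * \<psi> n" using \<psi>n[of n] by simp
  qed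
  have W0: "0 \<le> W" unfolding W_def wnorm_def by (simp add: infsum_nonneg)
  have pt2: "vw (-\<sigma>) n * (cmod (kapp K f n))\<^sup>2 \<le> W\<^sup>2 * (vw (-\<sigma>) n * \<psi> n)" for n
  proof -
    have "(cmod (kapp K f n))\<^sup>2 \<le> (sqrt (\<psi> n) * W)\<^sup>2" by (rule power_mono[OF pt]) simp
    also have "\<dots> = \<psi> n * W\<^sup>2" using \<psi>n[of n] by (simp add: power_mult_distrib)
    finally have "vw (-\<sigma>) n * (cmod (kapp K f n))\<^sup>2 \<le> vw (-\<sigma>) n * (\<psi> n * W\<^sup>2)"
      by (rule mult_left_mono) (rule less_imp_le[OF vw_pos])
    then show ?thesis by (simp add: ac_simps)
  qed
  have sk: "(\<lambda>n. vw (-\<sigma>) n * (cmod (kapp K f n))\<^sup>2) summable_on UNIV"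
  proof (rule summable_on_comparison_test)
    show "(\<lambda>n. W\<^sup>2 * (vw (-\<sigma>) n * \<psi> n)) summable_on UNIV" by (rule summable_on_cmult_right[OF sv\<psi>])
  qed (use pt2 in auto)
  then show "l2w (-\<sigma>) (kapp K f)" by (simp add: l2w_def)
  have "infsum (\<lambda>n. vw (-\<sigma>) n * (cmod (kapp K f n))\<^sup>2) UNIV \<le> infsum (\<lambda>n. W\<^sup>2 * (vw (-\<sigma>) n * \<psi> n)) UNIV"
    by (rule infsum_mono[OF sk summable_on_cmult_right[OF sv\<psi>] pt2])
  also have "\<dots> = W\<^sup>2 * HS \<sigma> K" unfolding HS_def \<psi>_def[symmetric] by (rule infsum_cmult_right) (use sv\<psi> in simp)
  finally have "wnorm (-\<sigma>) (kapp K f) \<le> sqrt (W\<^sup>2 * HS \<sigma> K)" unfolding wnorm_def by simp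
  also have "\<dots> = sqrt (HS \<sigma> K) * W" using W0 by (simp add: real_sqrt_mult)
  finally show "wnorm (-\<sigma>) (kapp K f) \<le> sqrt (HS \<sigma> K) * wnorm \<sigma> f" unfolding W_def .
  show "0 \<le> HS \<sigma> K" unfolding HS_def \<psi>_def[symmetric] by (rule infsum_nonneg) (use \<psi>n in simp)
qed

lemma kapp_linear:
  assumes s: "\<sigma> > 1/2" and f: "l2w \<sigma> f" and g: "l2w \<sigma> g" and K: "\<And>n m. cmod (K n m) \<le> C"
  shows "kapp K (\<lambda>n. a * f n + b * g n) = (\<lambda>n. a * kapp K f n + b * kapp K g n)"
proof
  fix n
  have sf: "(\<lambda>m. K n m * f m) summable_on UNIV" by (rule kapp_summable[OF s f K])
  have sg: "(\<lambda>m. K n m * g m) summable_on UNIV" by (rule kapp_summable[OF s g K])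
  have "kapp K (\<lambda>n. a * f n + b * g n) n = infsum (\<lambda>m. a * (K n m * f m) + b * (K n m * g m)) UNIV"
    unfolding kapp_def by (simp add: algebra_simps)
  also have "\<dots> = infsum (\<lambda>m. a * (K n m * f m)) UNIV + infsum (\<lambda>m. b * (K n m * g m)) UNIV"
    by (rule infsum_add[OF summable_on_cmult_right[OF sf] summable_on_cmult_right[OF sg]])
  also have "\<dots> = a * kapp K f n + b * kapp K g n"
    unfolding kapp_def by (simp add: infsum_cmult_right sf sg)
  finally show "kapp K (\<lambda>n. a * f n + b * g n) n = a * kapp K f n + b * kapp K g n" .
qed



lemma dc_infsum:
  fixes v :: "'a \<Rightarrow> real" and \<phi> :: "'b \<Rightarrow> 'a \<Rightarrow> real"
  assumes vs: "v summable_on UNIV" and vn: "\<And>m. 0 \<le> v m"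
    and ev: "\<forall>\<^sub>F x in F. \<forall>m. 0 \<le> \<phi> x m \<and> \<phi> x m \<le> K"
    and lim: "\<And>m. ((\<lambda>x. \<phi> x m) \<longlongrightarrow> 0) F"
    and e: "e > 0"
  shows "\<forall>\<^sub>F x in F. infsum (\<lambda>m. v m * \<phi> x m) UNIV < e"
proof -
  define K1 where "K1 = \<bar>K\<bar> + 1"
  have K1: "0 < K1" by (simp add: K1_def)
  obtain S where S: "finite S" "dist (sum v S) (infsum v UNIV) \<le> e / (4 * K1)"
    using infsum_finite_approximation[OF vs, of "e / (4 * K1)"] e K1 by auto
  have sc: "v summable_on (UNIV - S)" by (rule summable_on_subset[OF vs]) simp
  have split: "infsum g UNIV = sum g S + infsum g (UNIV - S)" if "g summable_on UNIV" for g :: "'a \<Rightarrow> real"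
  proof -
    have "infsum g (S \<union> (UNIV - S)) = infsum g S + infsum g (UNIV - S)"
      by (rule infsum_Un_disjoint) (use that S(1) in \<open>auto intro: summable_on_subset\<close>)
    then show ?thesis using S(1) by (simp add: Un_Diff_cancel)
  qed
  have tail: "infsum v (UNIV - S) \<le> e / (4 * K1)"
    using split[OF vs] S(2) by (simp add: dist_real_def)
  have fin: "((\<lambda>x. \<Sum>m\<in>S. v m * \<phi> x m) \<longlongrightarrow> (\<Sum>m\<in>S. v m * 0)) F"
    by (intro tendsto_sum tendsto_mult tendsto_const lim)
  then have fin2: "\<forall>\<^sub>F x in F. (\<Sum>m\<in>S. v m * \<phi> x m) < e / 2"
    using e by (intro order_tendstoD(2)[OF fin]) simp
  show ?thesis using ev fin2
  proof eventually_elim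
    case (elim x)
    have K0: "0 \<le> K" using elim(1) by (meson order.trans)
    have vp: "(\<lambda>m. v m * \<phi> x m) summable_on UNIV"
    proof (rule summable_on_comparison_test[OF summable_on_cmult_left[OF vs, of K]])
      fix m show "v m * \<phi> x m \<le> v m * K" using elim(1) vn[of m] by (simp add: mult_left_mono)
      show "0 \<le> v m * \<phi> x m" using elim(1) vn[of m] by simp
    qed
    have "infsum (\<lambda>m. v m * \<phi> x m) (UNIV - S) \<le> infsum (\<lambda>m. v m * K) (UNIV - S)"
    proof (rule infsum_mono)
      show "(\<lambda>m. v m * \<phi> x m) summable_on UNIV - S" by (rule summable_on_subset[OF vp]) simp
      show "(\<lambda>m. v m * K) summable_on UNIV - S" by (rule summable_on_cmult_left[OF sc])
      fix m show "v m * \<phi> x m \<le> v m * K" using elim(1) vn[of m] by (simp add: mult_left_mono)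
    qed
    also have "\<dots> = infsum v (UNIV - S) * K" by (rule infsum_cmult_left) (use sc in simp)
    also have "\<dots> \<le> e / (4 * K1) * K" by (rule mult_right_mono[OF tail K0])
    also have "\<dots> \<le> e / 4"
    proof -
      have "K \<le> K1" by (simp add: K1_def)
      then have "e / (4 * K1) * K \<le> e / (4 * K1) * K1" using e K1 by (intro mult_left_mono) auto
      also have "\<dots> = e / 4" using K1 by simp
      finally show ?thesis .
    qed
    finally have t: "infsum (\<lambda>m. v m * \<phi> x m) (UNIV - S) \<le> e / 4" .
    have "infsum (\<lambda>m. v m * \<phi> x m) UNIV = (\<Sum>m\<in>S. v m * \<phi> x m) + infsum (\<lambda>m. v m * \<phi> x m) (UNIV - S)"
      by (rule split[OF vp])
    also have "\<dots> < e" using elim(2) t e by linarith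
    finally show ?case .
  qed
qed



lemma l2w0_iff: "l2w 0 w \<longleftrightarrow> (\<lambda>n. (cmod (w n))\<^sup>2) summable_on UNIV"
proof -
  have "\<And>n. (1 + real_of_int \<bar>n\<bar>) powr (2 * 0) = 1" by (simp add: add_pos_nonneg)
  then show ?thesis by (simp add: l2w_def)
qed

lemma shift_infsum:
  fixes g :: "int \<Rightarrow> real"
  shows "infsum (\<lambda>n. g (n + c)) UNIV = infsum g UNIV"
proof -
  have "bij_betw (\<lambda>n. n + c) UNIV UNIV"
    by (rule bij_betwI[where g="\<lambda>n. n - c"]) auto
  then show ?thesis by (rule infsum_reindex_bij_betw)
qed

lemma shift_summable:
  fixes g :: "int \<Rightarrow> real"
  shows "(\<lambda>n. g (n + c)) summable_on UNIV \<longleftrightarrow> g summable_on UNIV"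
proof -
  have "bij_betw (\<lambda>n. n + c) UNIV UNIV"
    by (rule bij_betwI[where g="\<lambda>n. n - c"]) auto
  then show ?thesis by (rule summable_on_reindex_bij_betw)
qed

lemma hom_unique:
  fixes w :: "int \<Rightarrow> complex"
  assumes w: "l2w 0 w" and h: "\<And>n. Hop q w n - z * w n = 0" and im: "Im z \<noteq> 0"
  shows "w = (\<lambda>_. 0)"
proof -
  have sw: "(\<lambda>n. (cmod (w n))\<^sup>2) summable_on UNIV" using w by (simp add: l2w0_iff)
  define a where "a n = Im (cnj (w n) * w (n+1))" for n
  have loc: "Im z * (cmod (w n))\<^sup>2 = a (n - 1) - a n" for n
  proof -
    have "Im (cnj (w n) * Hop q w n) = Im (cnj (w n) * (z * w n))" using h[of n] by simp
    moreover have "Im (cnj (w n) * (z * w n)) = Im z * (cmod (w n))\<^sup>2"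
    proof -
      have "cnj (w n) * (z * w n) = z * (w n * cnj (w n))" by (simp add: algebra_simps)
      also have "w n * cnj (w n) = complex_of_real ((cmod (w n))\<^sup>2)" by (rule complex_norm_square[symmetric])
      finally have "cnj (w n) * (z * w n) = z * complex_of_real ((cmod (w n))\<^sup>2)" .
      moreover have "Im (z * complex_of_real r) = Im z * r" for r by simp
      ultimately show ?thesis by (simp only:)
    qed
    moreover have "Im (cnj (w n) * Hop q w n) = - a n + a (n - 1)"
    proof -
      have "cnj (w n) * Hop q w n = - (cnj (w n) * w (n+1)) + 2 * (cnj (w n) * w n) - cnj (w n) * w (n - 1)
          + complex_of_real (q n) * (cnj (w n) * w n)"
        by (simp add: Hop_def algebra_simps)
      moreover have "Im (cnj (w n) * w n) = 0" by (simp add: complex_norm_square[symmetric])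
      moreover have "Im (cnj (w n) * w (n - 1)) = - a (n - 1)" by (simp add: a_def algebra_simps)
      ultimately show ?thesis by (simp add: a_def)
    qed
    ultimately show ?thesis by simp
  qed
  have ab: "\<bar>a n\<bar> \<le> (cmod (w n))\<^sup>2 + (cmod (w (n+1)))\<^sup>2" for n
  proof -
    have "\<bar>a n\<bar> \<le> cmod (cnj (w n) * w (n+1))" unfolding a_def by (rule abs_Im_le_cmod)
    also have "\<dots> = cmod (w n) * cmod (w (n+1))" by (simp add: norm_mult)
    also have "\<dots> \<le> (cmod (w n))\<^sup>2 + (cmod (w (n+1)))\<^sup>2"
    proof -
      have "2 * cmod (w n) * cmod (w (n+1)) \<le> (cmod (w n))\<^sup>2 + (cmod (w (n+1)))\<^sup>2" by (rule sum_squares_bound)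
      moreover have "0 \<le> cmod (w n) * cmod (w (n+1))" by simp
      ultimately show ?thesis by linarith
    qed
    finally show ?thesis .
  qed
  have sw1: "(\<lambda>n. (cmod (w (n+1)))\<^sup>2) summable_on UNIV" using sw shift_summable[of "\<lambda>n. (cmod (w n))\<^sup>2" 1] by simp
  have saa: "(\<lambda>n. \<bar>a n\<bar>) summable_on UNIV"
  proof (rule summable_on_comparison_test[OF summable_on_add[OF sw sw1]])
    fix n show "\<bar>a n\<bar> \<le> (cmod (w n))\<^sup>2 + (cmod (w (n+1)))\<^sup>2" by (rule ab)
    show "0 \<le> \<bar>a n\<bar>" by simp
  qed
  have "(\<lambda>n. norm (a n)) summable_on UNIV" using saa by (simp only: real_norm_def)
  then have sa: "a summable_on UNIV" by (rule summable_on_iff_abs_summable_on_real[THEN iffD2])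
  have sa1: "(\<lambda>n. a (n + -1)) summable_on UNIV" using sa shift_summable[of a "-1"] by simp
  have "infsum (\<lambda>n. Im z * (cmod (w n))\<^sup>2) UNIV = infsum (\<lambda>n. a (n + -1) - a n) UNIV"
    by (rule infsum_cong) (simp add: loc)
  also have "\<dots> = infsum (\<lambda>n. a (n + -1) + - a n) UNIV" by simp
  also have "\<dots> = infsum (\<lambda>n. a (n + -1)) UNIV + infsum (\<lambda>n. - a n) UNIV"
    by (rule infsum_add[OF sa1]) (simp add: summable_on_uminus sa)
  also have "\<dots> = infsum (\<lambda>n. a (n + -1)) UNIV - infsum a UNIV" by (simp add: infsum_uminus)
  also have "\<dots> = 0" using shift_infsum[of a "-1"] by simp
  finally have "Im z * infsum (\<lambda>n. (cmod (w n))\<^sup>2) UNIV = 0"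
    using infsum_cmult_right[of "Im z" "\<lambda>n. (cmod (w n))\<^sup>2" UNIV] sw by simp
  then have z0: "infsum (\<lambda>n. (cmod (w n))\<^sup>2) UNIV = 0" using im by simp
  show ?thesis
  proof
    fix n
    have "(cmod (w n))\<^sup>2 = 0" by (rule nonneg_infsum_le_0D[OF _ sw]) (use z0 in simp_all)
    then show "w n = 0" by simp
  qed
qed



lemma Hop_diff: "Hop q (\<lambda>n. u n - v n) n = Hop q u n - Hop q v n"
  by (simp add: Hop_def algebra_simps)

lemma resolvent_unique:
  assumes u: "l2w 0 u" and e: "\<And>n. Hop q u n - z * u n = f n" and im: "Im z \<noteq> 0"
  shows "resolvent q z f = u"
  unfolding resolvent_def
proof (rule the_equality)
  show "l2w 0 u \<and> (\<forall>n. Hop q u n - z * u n = f n)" using u e by simp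
  fix u' assume a: "l2w 0 u' \<and> (\<forall>n. Hop q u' n - z * u' n = f n)"
  define w where "w n = u' n - u n" for n
  have "(\<lambda>n. (cmod (w n))\<^sup>2) summable_on UNIV"
  proof (rule summable_on_comparison_test)
    show "(\<lambda>n. 2 * (cmod (u' n))\<^sup>2 + 2 * (cmod (u n))\<^sup>2) summable_on UNIV"
      using a u by (intro summable_on_add summable_on_cmult_right) (simp_all add: l2w0_iff)
    fix n
    have "cmod (w n) \<le> cmod (u' n) + cmod (u n)" unfolding w_def by (rule norm_triangle_ineq4)
    then have "(cmod (w n))\<^sup>2 \<le> (cmod (u' n) + cmod (u n))\<^sup>2" by (rule power_mono) simp
    also have "\<dots> \<le> 2 * (cmod (u' n))\<^sup>2 + 2 * (cmod (u n))\<^sup>2"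
      using sum_squares_bound[of "cmod (u' n)" "cmod (u n)"] by (simp add: power2_sum)
    finally show "(cmod (w n))\<^sup>2 \<le> 2 * (cmod (u' n))\<^sup>2 + 2 * (cmod (u n))\<^sup>2" .
  qed simp
  then have wl: "l2w 0 w" by (simp add: l2w0_iff)
  have "\<And>n. Hop q w n - z * w n = 0"
  proof -
    fix n
    have "Hop q w n - z * w n = (Hop q u' n - z * u' n) - (Hop q u n - z * u n)"
      unfolding w_def Hop_diff by (simp add: algebra_simps)
    then show "Hop q w n - z * w n = 0" using a e by simp
  qed
  from hom_unique[OF wl this im] have "w = (\<lambda>_. 0)" .
  then show "u' = u" unfolding w_def by (metis (no_types) eq_iff_diff_eq_0 ext)
qed



lemma geo_int_summable:
  fixes r :: real assumes "0 \<le> r" "r < 1"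
  shows "(\<lambda>k::int. r ^ nat \<bar>k\<bar>) summable_on UNIV"
proof (rule int_summable_from_nat)
  show "summable (\<lambda>n. r ^ nat \<bar>int n\<bar>)" using summable_geometric[of r] assms by simp
  show "summable (\<lambda>n. r ^ nat \<bar>- int n\<bar>)" using summable_geometric[of r] assms by simp
qed (use assms in simp)

lemma l2_of_kernel:
  fixes K :: "int \<Rightarrow> int \<Rightarrow> complex" and f :: "int \<Rightarrow> complex"
  assumes K: "\<And>n m. cmod (K n m) \<le> C * r ^ nat \<bar>n - m\<bar>" and r: "0 \<le> r" "r < 1" and C: "0 \<le> C"
    and f1: "(\<lambda>m. cmod (f m)) summable_on UNIV"
  shows "(\<lambda>n. (cmod (kapp K f n))\<^sup>2) summable_on UNIV"
proof -
  define F1 where "F1 = infsum (\<lambda>m. cmod (f m)) UNIV"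
  define R where "R = infsum (\<lambda>k::int. r ^ nat \<bar>k\<bar>) UNIV"
  have gs: "(\<lambda>k::int. r ^ nat \<bar>k\<bar>) summable_on UNIV" by (rule geo_int_summable[OF r])
  have row_hs: "((\<lambda>n. r ^ nat \<bar>n - m\<bar>) has_sum R) UNIV" for m
  proof -
    have s1: "(\<lambda>n. r ^ nat \<bar>n + - m\<bar>) summable_on UNIV"
      using shift_summable[of "\<lambda>k. r ^ nat \<bar>k\<bar>" "-m"] gs by simp
    have i1: "infsum (\<lambda>n. r ^ nat \<bar>n + - m\<bar>) UNIV = R"
      using shift_infsum[of "\<lambda>k. r ^ nat \<bar>k\<bar>" "-m"] by (simp add: R_def)
    show ?thesis using has_sum_infsum[OF s1] i1 by simp
  qed
  define g where "g x = r ^ nat \<bar>snd x - fst x\<bar> * cmod (f (fst x))" for x :: "int \<times> int"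
  have gsum: "g summable_on Sigma UNIV (\<lambda>_. UNIV)"
  proof (rule summable_on_SigmaI)
    fix m :: int
    show "((\<lambda>n. g (m, n)) has_sum (R * cmod (f m))) UNIV"
      unfolding g_def fst_conv snd_conv by (rule has_sum_cmult_left[OF row_hs])
  next
    show "(\<lambda>m. R * cmod (f m)) summable_on UNIV" by (rule summable_on_cmult_right[OF f1])
  next
    fix m n show "0 \<le> g (m, n)" using r by (simp add: g_def)
  qed
  then have gsum2: "(\<lambda>(n, m). g (m, n)) summable_on (UNIV \<times> UNIV)"
    using summable_on_swap[of g UNIV UNIV] by simp
  define a where "a n = infsum (\<lambda>m. r ^ nat \<bar>n - m\<bar> * cmod (f m)) UNIV" for n
  have rowsum: "(\<lambda>m. r ^ nat \<bar>n - m\<bar> * cmod (f m)) summable_on UNIV" for n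
  proof (rule summable_on_comparison_test[OF f1])
    fix m show "r ^ nat \<bar>n - m\<bar> * cmod (f m) \<le> cmod (f m)"
      using r by (intro mult_left_le_one_le power_le_one) auto
    show "0 \<le> r ^ nat \<bar>n - m\<bar> * cmod (f m)" using r by simp
  qed
  have asum: "a summable_on UNIV"
  proof -
    have "(\<lambda>n. infsum (\<lambda>m. (\<lambda>(n, m). g (m, n)) (n, m)) UNIV) summable_on UNIV"
    proof (rule summable_on_SigmaD)
      show "(\<lambda>(n, m). g (m, n)) summable_on Sigma UNIV (\<lambda>_. UNIV)" using gsum2 by simp
      fix n show "(\<lambda>m. (\<lambda>(n, m). g (m, n)) (n, m)) summable_on UNIV"
        using rowsum[of n] by (simp add: g_def abs_minus_commute)
    qed
    moreover have "(\<lambda>n. infsum (\<lambda>m. (\<lambda>(n, m). g (m, n)) (n, m)) UNIV) = a"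
      by (rule ext) (simp add: g_def a_def abs_minus_commute)
    ultimately show ?thesis by simp
  qed
  have aF: "a n \<le> F1" for n unfolding a_def F1_def
  proof (rule infsum_mono[OF rowsum f1])
    fix m show "r ^ nat \<bar>n - m\<bar> * cmod (f m) \<le> cmod (f m)"
      using r by (intro mult_left_le_one_le power_le_one) auto
  qed
  have a0: "0 \<le> a n" for n unfolding a_def by (rule infsum_nonneg) (use r in simp)
  have kb: "cmod (kapp K f n) \<le> C * a n" for n
  proof -
    have sKf: "(\<lambda>m. C * (r ^ nat \<bar>n - m\<bar> * cmod (f m))) summable_on UNIV"
      by (rule summable_on_cmult_right[OF rowsum])
    have bnd: "norm (K n m * f m) \<le> C * (r ^ nat \<bar>n - m\<bar> * cmod (f m))" for m
      unfolding norm_mult using mult_right_mono[OF K[of n m] norm_ge_zero[of "f m"]] by (simp add: mult.assoc)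
    have abs: "(\<lambda>m. norm (K n m * f m)) summable_on UNIV"
      by (rule summable_on_comparison_test[OF sKf bnd]) simp
    have "cmod (kapp K f n) \<le> infsum (\<lambda>m. norm (K n m * f m)) UNIV"
      unfolding kapp_def by (rule norm_infsum_bound[OF abs])
    also have "\<dots> \<le> infsum (\<lambda>m. C * (r ^ nat \<bar>n - m\<bar> * cmod (f m))) UNIV"
      by (rule infsum_mono[OF abs sKf bnd])
    also have "\<dots> = C * a n" unfolding a_def by (rule infsum_cmult_right) (use rowsum in simp)
    finally show ?thesis .
  qed
  show ?thesis
  proof (rule summable_on_comparison_test)
    show "(\<lambda>n. C\<^sup>2 * F1 * a n) summable_on UNIV" by (rule summable_on_cmult_right[OF asum])
    fix n
    have "(cmod (kapp K f n))\<^sup>2 \<le> (C * a n)\<^sup>2" by (rule power_mono[OF kb]) simp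
    also have "\<dots> = C\<^sup>2 * (a n * a n)" by (simp add: power2_eq_square)
    also have "\<dots> \<le> C\<^sup>2 * (F1 * a n)" by (intro mult_left_mono mult_right_mono aF a0) simp_all
    finally show "(cmod (kapp K f n))\<^sup>2 \<le> C\<^sup>2 * F1 * a n" by (simp add: mult.assoc)
  qed simp
qed

lemma summable_on_diff':
  fixes f g :: "'a \<Rightarrow> 'b::{topological_ab_group_add}"
  assumes "f summable_on A" "g summable_on A"
  shows "(\<lambda>x. f x - g x) summable_on A"
proof -
  have "(\<lambda>x. - g x) summable_on A" using assms(2) by (simp only: summable_on_uminus)
  from summable_on_add[OF assms(1) this] show ?thesis by simp
qed

lemma infsum_diff':
  fixes f g :: "'a \<Rightarrow> 'b::{topological_ab_group_add, t2_space}"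
  assumes "f summable_on A" "g summable_on A"
  shows "infsum (\<lambda>x. f x - g x) A = infsum f A - infsum g A"
proof -
  have ng: "(\<lambda>x. - g x) summable_on A" using assms(2) by (simp only: summable_on_uminus)
  have "infsum (\<lambda>x. f x - g x) A = infsum (\<lambda>x. f x + - g x) A" by simp
  also have "\<dots> = infsum f A + infsum (\<lambda>x. - g x) A" by (rule infsum_add[OF assms(1) ng])
  finally show ?thesis by (simp add: infsum_uminus)
qed

lemma infsum_lin3:
  fixes f g h :: "int \<Rightarrow> complex"
  assumes f: "f summable_on UNIV" and g: "g summable_on UNIV" and h: "h summable_on UNIV"
  shows "infsum (\<lambda>m. c * f m - g m - h m) UNIV = c * infsum f UNIV - infsum g UNIV - infsum h UNIV"
proof -
  have cf: "(\<lambda>m. c * f m) summable_on UNIV" by (rule summable_on_cmult_right[OF f])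
  have "infsum (\<lambda>m. c * f m - g m - h m) UNIV = infsum (\<lambda>m. c * f m - g m) UNIV - infsum h UNIV"
    by (rule infsum_diff'[OF summable_on_diff'[OF cf g] h])
  also have "infsum (\<lambda>m. c * f m - g m) UNIV = infsum (\<lambda>m. c * f m) UNIV - infsum g UNIV"
    by (rule infsum_diff'[OF cf g])
  finally show ?thesis using f by (simp add: infsum_cmult_right)
qed

lemma infsum_delta:
  fixes f :: "int \<Rightarrow> complex"
  shows "infsum (\<lambda>m. (if n = m then 1 else 0) * f m) UNIV = f n"
proof -
  have "infsum (\<lambda>m. (if n = m then 1 else 0) * f m) UNIV = infsum f {n}"
    by (rule infsum_cong_neutral) auto
  then show ?thesis by simp
qed

context qpot begin

lemma resolvent_eq:
  assumes z: "\<zeta> \<in> Dset \<delta>" and r: "cmod \<zeta> < 1" and W: "Wq q \<zeta> \<noteq> 0"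
    and im: "Im (2 - \<zeta> - 1/\<zeta>) \<noteq> 0" and s: "\<sigma> > 1/2" and f: "l2w \<sigma> f"
  shows "resolvent q (2 - \<zeta> - 1/\<zeta>) f = kapp (Gr q \<zeta>) f"
proof (rule resolvent_unique[OF _ _ im])
  define \<Gamma> where "\<Gamma> = (1 + P.EE) * (1 + R.EE) / cmod (Wq q \<zeta>)"
  have \<Gamma>0: "0 \<le> \<Gamma>" unfolding \<Gamma>_def using P.EE_ge1 R.EE_ge1 by simp
  have Kg: "cmod (Gr q \<zeta> n m) \<le> \<Gamma> * cmod \<zeta> ^ nat \<bar>n - m\<bar>" for n m
    unfolding \<Gamma>_def by (rule Gr_bound[OF z])
  have Kc: "cmod (Gr q \<zeta> n m) \<le> \<Gamma>" for n m
  proof -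
    have "cmod \<zeta> ^ nat \<bar>n - m\<bar> \<le> 1" using r by (simp add: power_le_one)
    then show ?thesis using Kg[of n m] \<Gamma>0 by (meson mult_left_le order_trans)
  qed
  have f1: "(\<lambda>m. cmod (f m)) summable_on UNIV" by (rule l1_of_l2w[OF s f])
  show "l2w 0 (kapp (Gr q \<zeta>) f)"
    unfolding l2w0_iff by (rule l2_of_kernel[OF Kg _ r \<Gamma>0 f1]) simp
  fix n
  have sm: "\<And>k. (\<lambda>m. Gr q \<zeta> k m * f m) summable_on UNIV" by (rule kapp_summable[OF s f Kc])
  let ?c = "\<zeta> + 1/\<zeta> + complex_of_real (q n)"
  have "Hop q (kapp (Gr q \<zeta>) f) n - (2 - \<zeta> - 1/\<zeta>) * kapp (Gr q \<zeta>) f n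
      = ?c * kapp (Gr q \<zeta>) f n - kapp (Gr q \<zeta>) f (n+1) - kapp (Gr q \<zeta>) f (n-1)"
    by (rule hop_eq)
  also have "\<dots> = infsum (\<lambda>m. ?c * (Gr q \<zeta> n m * f m) - Gr q \<zeta> (n+1) m * f m - Gr q \<zeta> (n-1) m * f m) UNIV"
    unfolding kapp_def by (rule infsum_lin3[OF sm sm sm, symmetric])
  also have "\<dots> = infsum (\<lambda>m. (?c * Gr q \<zeta> n m - Gr q \<zeta> (n+1) m - Gr q \<zeta> (n-1) m) * f m) UNIV"
    by (simp add: algebra_simps)
  also have "\<dots> = infsum (\<lambda>m. (if n = m then 1 else 0) * f m) UNIV"
    by (simp only: green[OF z W])
  also have "\<dots> = f n" by (rule infsum_delta)
  finally show "Hop q (kapp (Gr q \<zeta>) f) n - (2 - \<zeta> - 1/\<zeta>) * kapp (Gr q \<zeta>) f n = f n" .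
qed

end


lemma zeta_alg:
  fixes w S :: complex and s :: real
  assumes S: "S^2 = 4 - w^2" and s: "s^2 = 1"
  shows "(w + \<i> * complex_of_real s * S) / 2 \<noteq> 0"
    "1 / ((w + \<i> * complex_of_real s * S) / 2) = (w - \<i> * complex_of_real s * S) / 2"
    "(w + \<i> * complex_of_real s * S) / 2 - 1 / ((w + \<i> * complex_of_real s * S) / 2) = \<i> * complex_of_real s * S"
    "2 - (w + \<i> * complex_of_real s * S) / 2 - 1 / ((w + \<i> * complex_of_real s * S) / 2) = 2 - w"
proof -
  have s': "(complex_of_real s)^2 = 1" using s by (metis of_real_eq_1_iff of_real_power)
  have "(w + \<i> * complex_of_real s * S) * (w - \<i> * complex_of_real s * S) = w^2 + (complex_of_real s)^2 * S^2"
    by (simp add: algebra_simps power2_eq_square)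
  also have "\<dots> = 4" using S s' by simp
  finally have p: "((w + \<i> * complex_of_real s * S) / 2) * ((w - \<i> * complex_of_real s * S) / 2) = 1" by simp
  then show nz: "(w + \<i> * complex_of_real s * S) / 2 \<noteq> 0" by auto
  show inv: "1 / ((w + \<i> * complex_of_real s * S) / 2) = (w - \<i> * complex_of_real s * S) / 2"
    using p nz by (simp add: field_simps)
  show "(w + \<i> * complex_of_real s * S) / 2 - 1 / ((w + \<i> * complex_of_real s * S) / 2) = \<i> * complex_of_real s * S"
    unfolding inv by (simp add: field_simps)
  show "2 - (w + \<i> * complex_of_real s * S) / 2 - 1 / ((w + \<i> * complex_of_real s * S) / 2) = 2 - w"
    unfolding inv by (simp add: field_simps)
qed

lemma Im_z_identity:
  fixes \<zeta> :: complex assumes "\<zeta> \<noteq> 0"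
  shows "Im (2 - \<zeta> - 1/\<zeta>) = Im \<zeta> * (1 / (cmod \<zeta>)^2 - 1)"
proof -
  have "Im (1/\<zeta>) = - Im \<zeta> / (cmod \<zeta>)^2" by (simp add: Im_divide')
  then show ?thesis by (simp add: algebra_simps)
qed

lemma abs_lt1_from_Im:
  fixes \<zeta> :: complex assumes "\<zeta> \<noteq> 0" and "Im (2 - \<zeta> - 1/\<zeta>) * Im \<zeta> > 0"
  shows "cmod \<zeta> < 1"
proof -
  have e: "Im (2 - \<zeta> - 1/\<zeta>) * Im \<zeta> = (Im \<zeta>)^2 * (1 / (cmod \<zeta>)^2 - 1)"
    by (simp only: Im_z_identity[OF assms(1)]) (simp add: power2_eq_square algebra_simps)
  have "(Im \<zeta>)^2 * (1 / (cmod \<zeta>)^2 - 1) > 0" using assms(2) unfolding e .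
  then have "1 / (cmod \<zeta>)^2 - 1 > 0" by (auto simp: zero_less_mult_iff)
  then have "(cmod \<zeta>)^2 < 1" using assms(1) by (simp add: field_simps)
  then show ?thesis by (simp add: power_less_one_iff abs_square_less_1)
qed

context qpot begin

lemma fp_cont: "continuous_on (Dset \<delta>) (\<lambda>\<zeta>. fp q \<zeta> n)"
  unfolding fp_def
  by (intro continuous_intros P.jost_cont) (auto simp: Dset_def)

lemma fm_cont: "continuous_on (Dset \<delta>) (\<lambda>\<zeta>. fm q \<zeta> n)"
  unfolding fm_def
  by (intro continuous_intros R.jost_cont) (auto simp: Dset_def)

lemma Wq_cont: "continuous_on (Dset \<delta>) (\<lambda>\<zeta>. Wq q \<zeta>)"
  unfolding Wq_def Wr_def by (intro continuous_intros fp_cont fm_cont)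

lemma Gr_tendsto:
  assumes zt: "(zt \<longlongrightarrow> \<zeta>0) F" and z0: "\<zeta>0 \<in> Dset \<delta>" and ev: "\<forall>\<^sub>F x in F. zt x \<in> Dset \<delta>"
    and W: "Wq q \<zeta>0 \<noteq> 0"
  shows "((\<lambda>x. Gr q (zt x) n m) \<longlongrightarrow> Gr q \<zeta>0 n m) F"
proof -
  have a: "((\<lambda>x. fp q (zt x) (max n m)) \<longlongrightarrow> fp q \<zeta>0 (max n m)) F"
    by (rule continuous_on_tendsto_compose[OF fp_cont zt z0 ev])
  have b: "((\<lambda>x. fm q (zt x) (min n m)) \<longlongrightarrow> fm q \<zeta>0 (min n m)) F"
    by (rule continuous_on_tendsto_compose[OF fm_cont zt z0 ev])
  have c: "((\<lambda>x. Wq q (zt x)) \<longlongrightarrow> Wq q \<zeta>0) F"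
    by (rule continuous_on_tendsto_compose[OF Wq_cont zt z0 ev])
  show ?thesis unfolding Gr_def by (rule tendsto_divide[OF tendsto_mult[OF a b] c W])
qed

end


lemma wnorm_nonneg: "0 \<le> wnorm s f" unfolding wnorm_def by (simp add: infsum_nonneg)

theorem lemma3p3:
  fixes q :: "int \<Rightarrow> real" and \<omega> \<sigma> :: real
  assumes "(\<lambda>n. \<bar>q n\<bar>) summable_on UNIV"
    and "0 < \<omega>" and "\<omega> < 4"
    and "\<sigma> > 1/2"
  shows "\<forall>s \<in> {1, -1::real}. \<exists>L :: (int \<Rightarrow> complex) \<Rightarrow> (int \<Rightarrow> complex).
           (\<forall>f g a b. l2w \<sigma> f \<longrightarrow> l2w \<sigma> g \<longrightarrow> L (\<lambda>n. a * f n + b * g n) = (\<lambda>n. a * L f n + b * L g n))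
         \<and> (\<exists>C. \<forall>f. l2w \<sigma> f \<longrightarrow> l2w (-\<sigma>) (L f) \<and> wnorm (-\<sigma>) (L f) \<le> C * wnorm \<sigma> f)
         \<and> (\<forall>e>0. \<forall>\<^sub>F \<epsilon> in at_right 0. \<forall>f. l2w \<sigma> f \<longrightarrow>
               wnorm (-\<sigma>) (\<lambda>n. resolvent q (complex_of_real \<omega> + \<i> * complex_of_real (s * \<epsilon>)) f n - L f n)
                 \<le> e * wnorm \<sigma> f)"
proof (intro ballI)
  fix s :: real assume sS: "s \<in> {1, -1::real}"
  have s2: "s^2 = 1" using sS by auto
  have sabs: "\<bar>s\<bar> = 1" using sS by auto
  note q1 = assms(1) and sig = assms(4)
  define w0 where "w0 = 2 - \<omega>"
  have w0b: "w0^2 < 4"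
  proof -
    have "w0^2 - 4 = (w0 - 2) * (w0 + 2)" by (simp add: power2_eq_square algebra_simps)
    moreover have "(w0 - 2) * (w0 + 2) < 0" using assms(2,3) by (intro mult_neg_pos) (auto simp: w0_def)
    ultimately show ?thesis by simp
  qed
  define S0 where "S0 = sqrt (4 - w0^2)"
  have S0p: "0 < S0" using w0b by (simp add: S0_def)
  have S0sq: "S0^2 = 4 - w0^2" using w0b by (simp add: S0_def)
  define \<delta> where "\<delta> = S0 / 2"
  have dp: "0 < \<delta>" using S0p by (simp add: \<delta>_def)
  interpret Q: qpot q \<delta> by unfold_locales (rule q1, rule dp)
  define wv where "wv \<epsilon> = complex_of_real w0 - \<i> * complex_of_real (s * \<epsilon>)" for \<epsilon> :: real
  define Sv where "Sv \<epsilon> = csqrt (4 - (wv \<epsilon>)^2)" for \<epsilon>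
  define zt where "zt \<epsilon> = (wv \<epsilon> + \<i> * complex_of_real s * Sv \<epsilon>) / 2" for \<epsilon>
  define \<zeta>0 where "\<zeta>0 = (complex_of_real w0 + \<i> * complex_of_real s * complex_of_real S0) / 2"
  have Ssq: "(Sv \<epsilon>)^2 = 4 - (wv \<epsilon>)^2" for \<epsilon> by (simp add: Sv_def)
  have S0sq': "(complex_of_real S0)^2 = 4 - (complex_of_real w0)^2"
    using S0sq by (metis of_real_diff of_real_numeral of_real_power)
  have ztne: "zt \<epsilon> \<noteq> 0" for \<epsilon> using zeta_alg(1)[OF Ssq s2] by (simp add: zt_def)
  have zt_d: "zt \<epsilon> - 1 / zt \<epsilon> = \<i> * complex_of_real s * Sv \<epsilon>" for \<epsilon>
    using zeta_alg(3)[OF Ssq s2] by (simp add: zt_def)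
  have zt_z: "2 - zt \<epsilon> - 1 / zt \<epsilon> = complex_of_real \<omega> + \<i> * complex_of_real (s * \<epsilon>)" for \<epsilon>
    using zeta_alg(4)[OF Ssq[of \<epsilon>] s2] by (simp add: zt_def wv_def w0_def)
  have z0ne: "\<zeta>0 \<noteq> 0" using zeta_alg(1)[OF S0sq' s2] by (simp add: \<zeta>0_def)
  have z0d: "\<zeta>0 - 1 / \<zeta>0 = \<i> * complex_of_real s * complex_of_real S0"
    using zeta_alg(3)[OF S0sq' s2] by (simp add: \<zeta>0_def)
  have z0abs: "cmod \<zeta>0 = 1"
  proof -
    have "\<zeta>0 = Complex (w0/2) (s*S0/2)" by (simp add: \<zeta>0_def complex_eq_iff)
    then have "cmod \<zeta>0 = sqrt ((w0/2)^2 + (s*S0/2)^2)" by (simp add: cmod_def)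
    also have "(w0/2)^2 + (s*S0/2)^2 = (w0^2 + s^2 * S0^2) / 4" by (simp add: power_divide power_mult_distrib)
    also have "\<dots> = 1" using S0sq s2 by simp
    finally show ?thesis by simp
  qed
  have z0D: "\<zeta>0 \<in> Dset \<delta>"
  proof -
    have "cmod (\<zeta>0 - 1 / \<zeta>0) = S0" unfolding z0d using S0p sabs by (simp add: norm_mult)
    then show ?thesis using z0ne z0abs S0p by (simp add: Dset_def \<delta>_def)
  qed
  have W0: "Wq q \<zeta>0 \<noteq> 0" by (rule Q.W_nonzero[OF z0D z0abs])
  have wv_t: "(wv \<longlongrightarrow> complex_of_real w0) (at_right 0)"
  proof -
    have "((\<lambda>\<epsilon>. complex_of_real w0 - \<i> * complex_of_real (s * \<epsilon>)) \<longlongrightarrow> complex_of_real w0 - \<i> * complex_of_real (s * 0)) (at_right 0)"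
      by (intro tendsto_intros)
    then show ?thesis by (simp add: wv_def[abs_def])
  qed
  have Sv_t: "(Sv \<longlongrightarrow> complex_of_real S0) (at_right 0)"
  proof -
    have e4: "4 - (complex_of_real w0)^2 = complex_of_real (4 - w0^2)" by simp
    have nn: "4 - (complex_of_real w0)^2 \<notin> \<real>\<^sub>\<le>\<^sub>0" unfolding e4 using w0b by (simp add: complex_nonpos_Reals_iff)
    have "((\<lambda>\<epsilon>. 4 - (wv \<epsilon>)^2) \<longlongrightarrow> 4 - (complex_of_real w0)^2) (at_right 0)"
      by (intro tendsto_intros wv_t)
    from isCont_tendsto_compose[OF continuous_at_csqrt[OF nn] this]
    have "(Sv \<longlongrightarrow> csqrt (4 - (complex_of_real w0)^2)) (at_right 0)" by (simp add: Sv_def[abs_def])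
    moreover have "csqrt (4 - (complex_of_real w0)^2) = complex_of_real S0"
      unfolding e4 S0_def using w0b by (simp add: csqrt_of_real_nonneg)
    ultimately show ?thesis by simp
  qed
  have zt_t: "(zt \<longlongrightarrow> \<zeta>0) (at_right 0)"
  proof -
    have "((\<lambda>\<epsilon>. (wv \<epsilon> + \<i> * complex_of_real s * Sv \<epsilon>) / 2) \<longlongrightarrow> (complex_of_real w0 + \<i> * complex_of_real s * complex_of_real S0) / 2) (at_right 0)"
      by (intro tendsto_intros wv_t Sv_t) simp
    then show ?thesis by (simp add: zt_def[abs_def] \<zeta>0_def)
  qed
  have ev_pos: "\<forall>\<^sub>F \<epsilon> in at_right (0::real). 0 < \<epsilon>" by (rule eventually_at_right_less)
  have ev_small: "\<forall>\<^sub>F \<epsilon> in at_right (0::real). \<epsilon> < S0 / 2"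
  proof -
    have "((\<lambda>\<epsilon>::real. \<epsilon>) \<longlongrightarrow> 0) (at_right 0)" by (rule tendsto_ident_at)
    moreover have "(0::real) < S0 / 2" using S0p by linarith
    ultimately show ?thesis by (rule order_tendstoD(2))
  qed
  have ev_ReS: "\<forall>\<^sub>F \<epsilon> in at_right 0. S0 / 2 < Re (Sv \<epsilon>)"
  proof -
    have "((\<lambda>\<epsilon>. Re (Sv \<epsilon>)) \<longlongrightarrow> Re (complex_of_real S0)) (at_right 0)" by (intro tendsto_intros Sv_t)
    then show ?thesis by (rule order_tendstoD(1)) (use S0p in simp)
  qed
  have ev_D: "\<forall>\<^sub>F \<epsilon> in at_right 0. zt \<epsilon> \<in> Dset \<delta> \<and> cmod (zt \<epsilon>) < 1 \<and> 0 < \<epsilon>"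
    using ev_pos ev_small ev_ReS
  proof eventually_elim
    case (elim \<epsilon>)
    have imzt: "Im (zt \<epsilon>) = s * (Re (Sv \<epsilon>) - \<epsilon>) / 2" by (simp add: zt_def wv_def algebra_simps)
    have imz: "Im (2 - zt \<epsilon> - 1 / zt \<epsilon>) = s * \<epsilon>" unfolding zt_z by simp
    have "Im (2 - zt \<epsilon> - 1 / zt \<epsilon>) * Im (zt \<epsilon>) = s^2 * (\<epsilon> * (Re (Sv \<epsilon>) - \<epsilon>)) / 2"
      unfolding imzt imz by (simp add: power2_eq_square algebra_simps)
    also have "\<dots> > 0" using elim s2 by simp
    finally have lt1: "cmod (zt \<epsilon>) < 1" by (rule abs_lt1_from_Im[OF ztne])
    have "\<delta> \<le> Re (Sv \<epsilon>)" using elim by (simp add: \<delta>_def)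
    also have "\<dots> \<le> cmod (Sv \<epsilon>)" by (rule complex_Re_le_cmod)
    also have "\<dots> = cmod (zt \<epsilon> - 1 / zt \<epsilon>)" unfolding zt_d using sabs by (simp add: norm_mult)
    finally have "\<delta> \<le> cmod (zt \<epsilon> - 1 / zt \<epsilon>)" .
    then show ?case using lt1 ztne elim by (simp add: Dset_def)
  qed
  have ev_D': "\<forall>\<^sub>F \<epsilon> in at_right 0. zt \<epsilon> \<in> Dset \<delta>" using ev_D by (rule eventually_mono) simp
  have Wt: "((\<lambda>\<epsilon>. Wq q (zt \<epsilon>)) \<longlongrightarrow> Wq q \<zeta>0) (at_right 0)"
    by (rule continuous_on_tendsto_compose[OF Q.Wq_cont zt_t z0D ev_D'])
  have ev_W: "\<forall>\<^sub>F \<epsilon> in at_right 0. cmod (Wq q \<zeta>0) / 2 < cmod (Wq q (zt \<epsilon>))"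
  proof -
    have "((\<lambda>\<epsilon>. cmod (Wq q (zt \<epsilon>))) \<longlongrightarrow> cmod (Wq q \<zeta>0)) (at_right 0)" by (intro tendsto_intros Wt)
    then show ?thesis by (rule order_tendstoD(1)) (use W0 in simp)
  qed
  define \<Gamma> where "\<Gamma> = (1 + Q.P.EE) * (1 + Q.R.EE) / (cmod (Wq q \<zeta>0) / 2)"
  have num0: "0 \<le> (1 + Q.P.EE) * (1 + Q.R.EE)" using Q.P.EE_ge1 Q.R.EE_ge1 by simp
  have \<Gamma>0: "0 \<le> \<Gamma>" unfolding \<Gamma>_def using num0 by simp
  have G0b: "cmod (Gr q \<zeta>0 n m) \<le> \<Gamma>" for n m
  proof -
    have "cmod (Gr q \<zeta>0 n m) \<le> (1 + Q.P.EE) * (1 + Q.R.EE) / cmod (Wq q \<zeta>0) * cmod \<zeta>0 ^ nat \<bar>n - m\<bar>"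
      by (rule Q.Gr_bound[OF z0D])
    also have "\<dots> = (1 + Q.P.EE) * (1 + Q.R.EE) / cmod (Wq q \<zeta>0)" using z0abs by simp
    also have "\<dots> \<le> \<Gamma>" unfolding \<Gamma>_def using num0 W0 by (intro divide_left_mono) auto
    finally show ?thesis .
  qed
  have Gtb: "cmod (Gr q (zt \<epsilon>) n m) \<le> \<Gamma>"
    if D: "zt \<epsilon> \<in> Dset \<delta>" and W: "cmod (Wq q \<zeta>0) / 2 < cmod (Wq q (zt \<epsilon>))" for \<epsilon> n m
  proof -
    have "cmod (Gr q (zt \<epsilon>) n m) \<le> (1 + Q.P.EE) * (1 + Q.R.EE) / cmod (Wq q (zt \<epsilon>)) * cmod (zt \<epsilon>) ^ nat \<bar>n - m\<bar>"
      by (rule Q.Gr_bound[OF D])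
    also have "\<dots> \<le> (1 + Q.P.EE) * (1 + Q.R.EE) / cmod (Wq q (zt \<epsilon>)) * 1"
    proof (rule mult_left_mono)
      show "cmod (zt \<epsilon>) ^ nat \<bar>n - m\<bar> \<le> 1" using D by (intro power_le_one) (auto simp: Dset_def)
      show "0 \<le> (1 + Q.P.EE) * (1 + Q.R.EE) / cmod (Wq q (zt \<epsilon>))" using num0 by simp
    qed
    also have "\<dots> \<le> \<Gamma>" unfolding \<Gamma>_def mult_1_right
    proof (rule divide_left_mono)
      show "cmod (Wq q \<zeta>0) / 2 \<le> cmod (Wq q (zt \<epsilon>))" using W by simp
      show "0 \<le> (1 + Q.P.EE) * (1 + Q.R.EE)" by (rule num0)
      have "0 < cmod (Wq q \<zeta>0)" using W0 by simp
      moreover then have "0 < cmod (Wq q (zt \<epsilon>))" using W by linarith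
      ultimately show "0 < cmod (Wq q (zt \<epsilon>)) * (cmod (Wq q \<zeta>0) / 2)" by simp
    qed
    finally show ?thesis .
  qed
  show "\<exists>L :: (int \<Rightarrow> complex) \<Rightarrow> (int \<Rightarrow> complex).
           (\<forall>f g a b. l2w \<sigma> f \<longrightarrow> l2w \<sigma> g \<longrightarrow> L (\<lambda>n. a * f n + b * g n) = (\<lambda>n. a * L f n + b * L g n))
         \<and> (\<exists>C. \<forall>f. l2w \<sigma> f \<longrightarrow> l2w (-\<sigma>) (L f) \<and> wnorm (-\<sigma>) (L f) \<le> C * wnorm \<sigma> f)
         \<and> (\<forall>e>0. \<forall>\<^sub>F \<epsilon> in at_right 0. \<forall>f. l2w \<sigma> f \<longrightarrow>
               wnorm (-\<sigma>) (\<lambda>n. resolvent q (complex_of_real \<omega> + \<i> * complex_of_real (s * \<epsilon>)) f n - L f n)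
                 \<le> e * wnorm \<sigma> f)"
  proof (intro exI[of _ "kapp (Gr q \<zeta>0)"] conjI allI impI)
    fix f g :: "int \<Rightarrow> complex" and a b :: complex
    assume "l2w \<sigma> f" "l2w \<sigma> g"
    then show "kapp (Gr q \<zeta>0) (\<lambda>n. a * f n + b * g n) = (\<lambda>n. a * kapp (Gr q \<zeta>0) f n + b * kapp (Gr q \<zeta>0) g n)"
      by (rule kapp_linear[where K="Gr q \<zeta>0", OF sig _ _ G0b])
  next
    show "\<exists>C. \<forall>f. l2w \<sigma> f \<longrightarrow> l2w (-\<sigma>) (kapp (Gr q \<zeta>0) f) \<and> wnorm (-\<sigma>) (kapp (Gr q \<zeta>0) f) \<le> C * wnorm \<sigma> f"
    proof (intro exI[of _ "sqrt (HS \<sigma> (Gr q \<zeta>0))"] allI impI conjI)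
      fix f :: "int \<Rightarrow> complex" assume f: "l2w \<sigma> f"
      have b: "\<And>n m. cmod (Gr q \<zeta>0 n m) \<le> \<Gamma>" by (rule G0b)
      show "l2w (-\<sigma>) (kapp (Gr q \<zeta>0) f)" by (rule kapp_HS(1)[where K="Gr q \<zeta>0", OF sig f b])
      show "wnorm (-\<sigma>) (kapp (Gr q \<zeta>0) f) \<le> sqrt (HS \<sigma> (Gr q \<zeta>0)) * wnorm \<sigma> f"
        by (rule kapp_HS(2)[where K="Gr q \<zeta>0", OF sig f b])
    qed
  next
    fix e :: real assume e: "e > 0"
    define K where "K \<epsilon> n m = Gr q (zt \<epsilon>) n m - Gr q \<zeta>0 n m" for \<epsilon> n m
    define \<psi> where "\<psi> \<epsilon> n = infsum (\<lambda>m. vw (-\<sigma>) m * (cmod (K \<epsilon> n m))\<^sup>2) UNIV" for \<epsilon> n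
    have vs: "vw (-\<sigma>) summable_on UNIV" by (rule vw_summable[OF sig])
    have vn: "\<And>m. 0 \<le> vw (-\<sigma>) m" by simp
    define V where "V = infsum (vw (-\<sigma>)) UNIV"
    have evK: "\<forall>\<^sub>F \<epsilon> in at_right 0. \<forall>n m. cmod (K \<epsilon> n m) \<le> 2 * \<Gamma>"
      using ev_D ev_W
    proof eventually_elim
      case (elim \<epsilon>)
      show ?case
      proof (intro allI)
        fix n m
        have "cmod (K \<epsilon> n m) \<le> cmod (Gr q (zt \<epsilon>) n m) + cmod (Gr q \<zeta>0 n m)"
          unfolding K_def by (rule norm_triangle_ineq4)
        also have "\<dots> \<le> \<Gamma> + \<Gamma>" using Gtb[of \<epsilon> n m] G0b[of n m] elim by simp
        finally show "cmod (K \<epsilon> n m) \<le> 2 * \<Gamma>" by simp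
      qed
    qed
    have evK2: "\<forall>\<^sub>F \<epsilon> in at_right 0. \<forall>m. 0 \<le> (cmod (K \<epsilon> n m))\<^sup>2 \<and> (cmod (K \<epsilon> n m))\<^sup>2 \<le> (2 * \<Gamma>)\<^sup>2" for n
      using evK
    proof (rule eventually_mono)
      fix \<epsilon> assume h: "\<forall>n m. cmod (K \<epsilon> n m) \<le> 2 * \<Gamma>"
      show "\<forall>m. 0 \<le> (cmod (K \<epsilon> n m))\<^sup>2 \<and> (cmod (K \<epsilon> n m))\<^sup>2 \<le> (2 * \<Gamma>)\<^sup>2"
      proof
        fix m
        have "(cmod (K \<epsilon> n m))\<^sup>2 \<le> (2 * \<Gamma>)\<^sup>2" by (rule power_mono[OF h[rule_format] norm_ge_zero])
        then show "0 \<le> (cmod (K \<epsilon> n m))\<^sup>2 \<and> (cmod (K \<epsilon> n m))\<^sup>2 \<le> (2 * \<Gamma>)\<^sup>2" by simp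
      qed
    qed
    have Klim: "((\<lambda>\<epsilon>. (cmod (K \<epsilon> n m))\<^sup>2) \<longlongrightarrow> 0) (at_right 0)" for n m
    proof -
      have "((\<lambda>\<epsilon>. Gr q (zt \<epsilon>) n m) \<longlongrightarrow> Gr q \<zeta>0 n m) (at_right 0)"
        by (rule Q.Gr_tendsto[OF zt_t z0D ev_D' W0])
      then have "((\<lambda>\<epsilon>. K \<epsilon> n m) \<longlongrightarrow> 0) (at_right 0)"
        unfolding K_def by (rule LIM_zero)
      then have "((\<lambda>\<epsilon>. (cmod (K \<epsilon> n m))\<^sup>2) \<longlongrightarrow> (cmod 0)\<^sup>2) (at_right 0)"
        by (intro tendsto_intros)
      then show ?thesis by simp
    qed
    have \<psi>n: "0 \<le> \<psi> \<epsilon> n" for \<epsilon> n unfolding \<psi>_def by (rule infsum_nonneg) simp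
    have \<psi>lim: "((\<lambda>\<epsilon>. \<psi> \<epsilon> n) \<longlongrightarrow> 0) (at_right 0)" for n
    proof (rule order_tendstoI)
      fix a :: real assume "a < 0"
      then show "\<forall>\<^sub>F \<epsilon> in at_right 0. a < \<psi> \<epsilon> n" using \<psi>n by (intro always_eventually) (meson less_le_trans)
    next
      fix a :: real assume "0 < a"
      then show "\<forall>\<^sub>F \<epsilon> in at_right 0. \<psi> \<epsilon> n < a"
        unfolding \<psi>_def by (rule dc_infsum[OF vs vn evK2 Klim])
    qed
    have ev\<psi>: "\<forall>\<^sub>F \<epsilon> in at_right 0. \<forall>n. 0 \<le> \<psi> \<epsilon> n \<and> \<psi> \<epsilon> n \<le> (2 * \<Gamma>)\<^sup>2 * V"
      using evK
    proof eventually_elim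
      case (elim \<epsilon>)
      show ?case
      proof (intro allI conjI)
        fix n
        show "0 \<le> \<psi> \<epsilon> n" by (rule \<psi>n)
        have b: "vw (-\<sigma>) m * (cmod (K \<epsilon> n m))\<^sup>2 \<le> vw (-\<sigma>) m * (2 * \<Gamma>)\<^sup>2" for m
          by (rule mult_left_mono[OF power_mono[OF elim[rule_format] norm_ge_zero]]) simp
        have sb: "(\<lambda>m. vw (-\<sigma>) m * (2 * \<Gamma>)\<^sup>2) summable_on UNIV" by (rule summable_on_cmult_left[OF vs])
        have sa: "(\<lambda>m. vw (-\<sigma>) m * (cmod (K \<epsilon> n m))\<^sup>2) summable_on UNIV"
          by (rule summable_on_comparison_test[OF sb b]) simp
        have "\<psi> \<epsilon> n \<le> infsum (\<lambda>m. vw (-\<sigma>) m * (2 * \<Gamma>)\<^sup>2) UNIV"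
          unfolding \<psi>_def by (rule infsum_mono[OF sa sb b])
        also have "\<dots> = V * (2 * \<Gamma>)\<^sup>2" unfolding V_def by (rule infsum_cmult_left) (use vs in simp)
        finally show "\<psi> \<epsilon> n \<le> (2 * \<Gamma>)\<^sup>2 * V" by (simp add: mult.commute)
      qed
    qed
    have evHS: "\<forall>\<^sub>F \<epsilon> in at_right 0. infsum (\<lambda>n. vw (-\<sigma>) n * \<psi> \<epsilon> n) UNIV < e\<^sup>2"
      by (rule dc_infsum[OF vs vn ev\<psi> \<psi>lim]) (use e in simp)
    show "\<forall>\<^sub>F \<epsilon> in at_right 0. \<forall>f. l2w \<sigma> f \<longrightarrow>
               wnorm (-\<sigma>) (\<lambda>n. resolvent q (complex_of_real \<omega> + \<i> * complex_of_real (s * \<epsilon>)) f n - kapp (Gr q \<zeta>0) f n)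
                 \<le> e * wnorm \<sigma> f"
      using ev_D ev_W evK evHS
    proof eventually_elim
      case (elim \<epsilon>)
      show ?case
      proof (intro allI impI)
        fix f assume f: "l2w \<sigma> f"
        have Dz: "zt \<epsilon> \<in> Dset \<delta>" and lt1: "cmod (zt \<epsilon>) < 1" and epos: "0 < \<epsilon>" using elim(1) by auto
        have Wne: "Wq q (zt \<epsilon>) \<noteq> 0" using elim(2) W0 by auto
        have im: "Im (2 - zt \<epsilon> - 1 / zt \<epsilon>) \<noteq> 0" unfolding zt_z using epos sabs by auto
        have res: "resolvent q (complex_of_real \<omega> + \<i> * complex_of_real (s * \<epsilon>)) f = kapp (Gr q (zt \<epsilon>)) f"
          using Q.resolvent_eq[OF Dz lt1 Wne im sig f] unfolding zt_z .
        have G1b: "\<And>n m. cmod (Gr q (zt \<epsilon>) n m) \<le> \<Gamma>" using Gtb elim(1,2) by blast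
        have diff: "(\<lambda>n. kapp (Gr q (zt \<epsilon>)) f n - kapp (Gr q \<zeta>0) f n) = kapp (K \<epsilon>) f"
        proof
          fix n
          have "kapp (K \<epsilon>) f n = infsum (\<lambda>m. Gr q (zt \<epsilon>) n m * f m - Gr q \<zeta>0 n m * f m) UNIV"
            unfolding kapp_def K_def by (simp add: algebra_simps)
          also have "\<dots> = kapp (Gr q (zt \<epsilon>)) f n - kapp (Gr q \<zeta>0) f n"
            unfolding kapp_def by (rule infsum_diff'[OF kapp_summable[OF sig f G1b] kapp_summable[OF sig f G0b]])
          finally show "kapp (Gr q (zt \<epsilon>)) f n - kapp (Gr q \<zeta>0) f n = kapp (K \<epsilon>) f n" by simp
        qed
        have Kb: "\<And>n m. cmod (K \<epsilon> n m) \<le> 2 * \<Gamma>" using elim(3) by blast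
        have hs: "HS \<sigma> (K \<epsilon>) < e\<^sup>2" using elim(4) unfolding HS_def \<psi>_def .
        have hs0: "0 \<le> HS \<sigma> (K \<epsilon>)" by (rule kapp_HS(3)[OF sig f Kb])
        have "sqrt (HS \<sigma> (K \<epsilon>)) < e" using hs hs0 e by (simp add: real_sqrt_less_iff power2_eq_square)
          (metis abs_of_pos real_sqrt_abs real_sqrt_less_mono power2_eq_square)
        then have se: "sqrt (HS \<sigma> (K \<epsilon>)) \<le> e" by simp
        have "wnorm (-\<sigma>) (\<lambda>n. resolvent q (complex_of_real \<omega> + \<i> * complex_of_real (s * \<epsilon>)) f n - kapp (Gr q \<zeta>0) f n)
            = wnorm (-\<sigma>) (kapp (K \<epsilon>) f)" unfolding res diff ..
        also have "\<dots> \<le> sqrt (HS \<sigma> (K \<epsilon>)) * wnorm \<sigma> f" by (rule kapp_HS(2)[OF sig f Kb])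
        also have "\<dots> \<le> e * wnorm \<sigma> f" by (rule mult_right_mono[OF se wnorm_nonneg])
        finally show "wnorm (-\<sigma>) (\<lambda>n. resolvent q (complex_of_real \<omega> + \<i> * complex_of_real (s * \<epsilon>)) f n - kapp (Gr q \<zeta>0) f n)
                 \<le> e * wnorm \<sigma> f" .
      qed
    qed
  qed
qed


end
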